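(* For every integer $d>2$ there is a directed tree in which every vertex has degree at most $d$ and every directed path has length at most one, and whose span is at least $\lfloor d/2\rfloor+1$.
   Context: A directed tree is a DAG (directed acyclic graph) whose underlying undirected graph is a tree. An upward-planar layered drawing of a DAG $G$ maps each vertex $v$ to a point in the plane whose y-coordinate $y(v)$ is an integer, and each edge $(u,v)$ (directed from tail $u$ to head $v$) to a strictly y-monotone curve going upward from $u$ to $v$ (so $y(u)<y(v)$), such that no two edges intersect except at common endpoints. The span of an edge $(u,v)$ in such a drawing $\Gamma$ is $y(v)-y(u)$; the span of $\Gamma$ is the maximum span of its edges; the span of an upward-planar DAG is the minimum span over all its upward-planar layered drawings. The degree of a vertex is its total number of incident edges. The length of a directed path is its number of edges. *)

theory Defs
  imports "HOL-Analysis.Analysis"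
begin

definition directed_tree :: "'a set \<Rightarrow> ('a \<times> 'a) set \<Rightarrow> bool" where
  "directed_tree V E \<longleftrightarrow>
     finite V \<and> V \<noteq> {} \<and> E \<subseteq> V \<times> V \<and>
     acyclic E \<and>
     (\<forall>u v. (u, v) \<in> E \<longrightarrow> (v, u) \<notin> E) \<and>
     (\<forall>u\<in>V. \<forall>v\<in>V. (u, v) \<in> (E \<union> E\<inverse>)\<^sup>*) \<and>
     card V = card {{u, v} | u v. (u, v) \<in> E} + 1"

definition vdegree :: "('a \<times> 'a) set \<Rightarrow> 'a \<Rightarrow> nat" where
  "vdegree E v = card {e \<in> E. fst e = v \<or> snd e = v}"

definition paths_at_most_one :: "('a \<times> 'a) set \<Rightarrow> bool" where
  "paths_at_most_one E \<longleftrightarrow> (\<forall>u v w. (u, v) \<in> E \<longrightarrow> (v, w) \<notin> E)"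

definition upward_layered_drawing ::
  "'a set \<Rightarrow> ('a \<times> 'a) set \<Rightarrow> ('a \<Rightarrow> real) \<Rightarrow> ('a \<Rightarrow> int) \<Rightarrow> ('a \<times> 'a \<Rightarrow> real \<Rightarrow> real \<times> real) \<Rightarrow> bool" where
  "upward_layered_drawing V E x y c \<longleftrightarrow>
     inj_on (\<lambda>v. (x v, real_of_int (y v))) V \<and>
     (\<forall>(u, v) \<in> E.
        continuous_on {0..1} (c (u, v)) \<and>
        c (u, v) 0 = (x u, real_of_int (y u)) \<and>
        c (u, v) 1 = (x v, real_of_int (y v)) \<and>
        strict_mono_on {0..1} (\<lambda>t. snd (c (u, v) t))) \<and>
     (\<forall>e1\<in>E. \<forall>e2\<in>E. e1 \<noteq> e2 \<longrightarrow>
        c e1 ` {0..1} \<inter> c e2 ` {0..1} \<subseteq>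
          (\<lambda>v. (x v, real_of_int (y v))) ` ({fst e1, snd e1} \<inter> {fst e2, snd e2})) \<and>
     (\<forall>e\<in>E. \<forall>w\<in>V. (x w, real_of_int (y w)) \<in> c e ` {0..1} \<longrightarrow> w = fst e \<or> w = snd e)"

definition upward_planar :: "'a set \<Rightarrow> ('a \<times> 'a) set \<Rightarrow> bool" where
  "upward_planar V E \<longleftrightarrow> (\<exists>x y c. upward_layered_drawing V E x y c)"

definition dag_span :: "'a set \<Rightarrow> ('a \<times> 'a) set \<Rightarrow> nat" where
  "dag_span V E = (LEAST s::nat. \<exists>x y c. upward_layered_drawing V E x y c \<and>
       (\<forall>(u, v) \<in> E. y v - y u \<le> int s))"

end

theory Submission
  imports Defs
begin

definition good :: "'a set \<Rightarrow> ('a\<times>'a) set \<Rightarrow> ('a \<Rightarrow> real) \<Rightarrow> ('a \<Rightarrow> int) \<Rightarrow> ('a\<times>'a \<Rightarrow> real \<Rightarrow> real) \<Rightarrow> bool" where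
"good V E x y X \<longleftrightarrow>
 (\<forall>p q. (p,q) \<in> E \<longrightarrow> y p < y q \<and> continuous_on {real_of_int (y p)..real_of_int (y q)} (X (p,q))
     \<and> X (p,q) (y p) = x p \<and> X (p,q) (y q) = x q) \<and>
 (\<forall>p q p' q' t. (p,q) \<in> E \<longrightarrow> (p',q') \<in> E \<longrightarrow> (p,q) \<noteq> (p',q') \<longrightarrow> real_of_int (y p) \<le> t \<longrightarrow> t \<le> y q
     \<longrightarrow> y p' \<le> t \<longrightarrow> t \<le> y q' \<longrightarrow> X (p,q) t = X (p',q') t
     \<longrightarrow> (\<exists>v. (v = p \<or> v = q) \<and> (v = p' \<or> v = q') \<and> real_of_int (y v) = t))"

lemma drawing_edge:
  assumes "upward_layered_drawing V E x y c" "(p,q) \<in> E"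
  shows "continuous_on {0..1} (c (p, q)) \<and> c (p, q) 0 = (x p, real_of_int (y p)) \<and>
        c (p, q) 1 = (x q, real_of_int (y q)) \<and> strict_mono_on {0..1} (\<lambda>t. snd (c (p, q) t))"
  using assms unfolding upward_layered_drawing_def by fastforce

lemma drawing_good:
  assumes D: "upward_layered_drawing V E x y c"
  shows "\<exists>X. good V E x y X"
proof -
  define \<sigma> where "\<sigma> e = inv_into {0..1::real} (\<lambda>s. snd (c e s))" for e
  define X where "X e t = fst (c e (\<sigma> e t))" for e t
  have key: "continuous_on {real_of_int (y p)..real_of_int (y q)} (X (p,q)) \<and> y p < y q \<and>
      (\<forall>t\<in>{real_of_int (y p)..real_of_int (y q)}. \<sigma> (p,q) t \<in> {0..1} \<and> c (p,q) (\<sigma> (p,q) t) = (X (p,q) t, t))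
      \<and> \<sigma> (p,q) (y p) = 0 \<and> \<sigma> (p,q) (y q) = 1"
    if e: "(p,q) \<in> E" for p q
  proof -
    note E = drawing_edge[OF D e]
    let ?g = "\<lambda>s. snd (c (p,q) s)"
    have gc: "continuous_on {0..1} ?g" using E continuous_on_snd by blast
    have sm: "strict_mono_on {0..1} ?g" using E by blast
    have inj: "inj_on ?g {0..1}" using sm by (rule strict_mono_on_imp_inj_on)
    have g0: "?g 0 = y p" and g1: "?g 1 = y q" using E by auto
    have "?g 0 < ?g 1" using sm by (auto simp: monotone_on_def)
    then have ylt: "y p < y q" using g0 g1 by simp
    have img: "?g ` {0..1} = {real_of_int (y p)..real_of_int (y q)}"
    proof
      show "?g ` {0..1} \<subseteq> {real_of_int (y p)..real_of_int (y q)}"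
      proof
        fix z assume "z \<in> ?g ` {0..1}"
        then obtain s where s: "s \<in> {0..1}" "z = ?g s" by auto
        have "?g 0 \<le> ?g s" using sm s by (cases "s = 0") (auto simp: monotone_on_def intro: less_imp_le)
        moreover have "?g s \<le> ?g 1" using sm s by (cases "s = 1") (auto simp: monotone_on_def intro: less_imp_le)
        ultimately show "z \<in> {real_of_int (y p)..real_of_int (y q)}" using s g0 g1 by auto
      qed
    next
      show "{real_of_int (y p)..real_of_int (y q)} \<subseteq> ?g ` {0..1}"
      proof
        fix z assume z: "z \<in> {real_of_int (y p)..real_of_int (y q)}"
        have "\<exists>s\<ge>0. s \<le> 1 \<and> ?g s = z"
          by (rule IVT') (use z g0 g1 gc in auto)
        then show "z \<in> ?g ` {0..1}" by force
      qed
    qed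
    have sc: "continuous_on (?g ` {0..1}) (\<sigma> (p,q))"
      unfolding \<sigma>_def by (rule continuous_on_inv[OF gc]) (auto simp: inv_into_f_f[OF inj])
    have sin: "\<sigma> (p,q) t \<in> {0..1}" if "t \<in> {real_of_int (y p)..real_of_int (y q)}" for t
      unfolding \<sigma>_def using that img by (metis inv_into_into)
    have sg: "?g (\<sigma> (p,q) t) = t" if "t \<in> {real_of_int (y p)..real_of_int (y q)}" for t
      unfolding \<sigma>_def using that img by (metis f_inv_into_f)
    have cc: "continuous_on {0..1} (c (p,q))" using E by blast
    have "continuous_on {real_of_int (y p)..real_of_int (y q)} (\<lambda>t. fst (c (p,q) (\<sigma> (p,q) t)))"
    proof -
      have "continuous_on {real_of_int (y p)..real_of_int (y q)} (\<lambda>t. c (p,q) (\<sigma> (p,q) t))"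
        by (rule continuous_on_compose2[OF cc]) (use sc img sin in auto)
      then show ?thesis using continuous_on_fst by blast
    qed
    then have xc: "continuous_on {real_of_int (y p)..real_of_int (y q)} (X (p,q))"
      unfolding X_def by simp
    have s0: "\<sigma> (p,q) (y p) = 0" unfolding \<sigma>_def using inj g0 by (metis atLeastAtMost_iff inv_into_f_f order_refl zero_le_one)
    have s1: "\<sigma> (p,q) (y q) = 1" unfolding \<sigma>_def using inj g1 by (metis atLeastAtMost_iff inv_into_f_f order_refl zero_le_one)
    have "c (p,q) (\<sigma> (p,q) t) = (X (p,q) t, t)" if "t \<in> {real_of_int (y p)..real_of_int (y q)}" for t
      using sg[OF that] unfolding X_def by (metis prod.collapse)
    then show ?thesis using xc ylt sin s0 s1 by auto
  qed
  have "good V E x y X"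
    unfolding good_def
  proof (intro conjI allI impI)
    fix p q assume e: "(p,q) \<in> E"
    note K = key[OF e]
    show "y p < y q" using K by blast
    show "continuous_on {real_of_int (y p)..real_of_int (y q)} (X (p, q))" using K by blast
    show "X (p, q) (real_of_int (y p)) = x p" using K drawing_edge[OF D e] unfolding X_def by simp
    show "X (p, q) (real_of_int (y q)) = x q" using K drawing_edge[OF D e] unfolding X_def by simp
  next
    fix p q p' q' and t :: real
    assume e1: "(p,q) \<in> E" and e2: "(p',q') \<in> E" and ne: "(p,q) \<noteq> (p',q')"
      and t: "real_of_int (y p) \<le> t" "t \<le> y q" "y p' \<le> t" "t \<le> y q'" and eq: "X (p,q) t = X (p',q') t"
    have t1: "t \<in> {real_of_int (y p)..real_of_int (y q)}" using t by simp
    have t2: "t \<in> {real_of_int (y p')..real_of_int (y q')}" using t by simp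
    have P1: "(X (p,q) t, t) \<in> c (p,q) ` {0..1}"
    proof -
      have "\<sigma> (p,q) t \<in> {0..1}" "c (p,q) (\<sigma> (p,q) t) = (X (p,q) t, t)" using key[OF e1] t1 by blast+
      then show ?thesis by (metis image_eqI)
    qed
    have P2: "(X (p,q) t, t) \<in> c (p',q') ` {0..1}"
    proof -
      have "\<sigma> (p',q') t \<in> {0..1}" "c (p',q') (\<sigma> (p',q') t) = (X (p',q') t, t)" using key[OF e2] t2 by blast+
      then show ?thesis using eq by (metis image_eqI)
    qed
    have "c (p,q) ` {0..1} \<inter> c (p',q') ` {0..1} \<subseteq>
          (\<lambda>v. (x v, real_of_int (y v))) ` ({p, q} \<inter> {p', q'})"
    proof -
      have "\<forall>e1\<in>E. \<forall>e2\<in>E. e1 \<noteq> e2 \<longrightarrow>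
        c e1 ` {0..1} \<inter> c e2 ` {0..1} \<subseteq>
          (\<lambda>v. (x v, real_of_int (y v))) ` ({fst e1, snd e1} \<inter> {fst e2, snd e2})"
        using D unfolding upward_layered_drawing_def by blast
      from this[rule_format, OF e1 e2 ne] show ?thesis by simp
    qed
    then have "(X (p,q) t, t) \<in> (\<lambda>v. (x v, real_of_int (y v))) ` ({p, q} \<inter> {p', q'})"
      using P1 P2 by blast
    then obtain v where "v \<in> {p,q} \<inter> {p',q'}" "(X (p,q) t, t) = (x v, real_of_int (y v))"
      by blast
    then show "\<exists>v. (v = p \<or> v = q) \<and> (v = p' \<or> v = q') \<and> real_of_int (y v) = t" by auto
  qed
  then show ?thesis by blast
qed

lemma good_edge:
  assumes "good V E x y X" "(p,q) \<in> E"
  shows "y p < y q" "continuous_on {real_of_int (y p)..real_of_int (y q)} (X (p,q))"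
    "X (p,q) (y p) = x p" "X (p,q) (y q) = x q"
  using assms unfolding good_def by blast+

lemma good_meet:
  assumes "good V E x y X" "(p,q) \<in> E" "(p',q') \<in> E" "(p,q) \<noteq> (p',q')"
    "real_of_int (y p) \<le> t" "t \<le> y q" "y p' \<le> t" "t \<le> y q'" "X (p,q) t = X (p',q') t"
  shows "\<exists>v. (v = p \<or> v = q) \<and> (v = p' \<or> v = q') \<and> real_of_int (y v) = t"
  using assms unfolding good_def by blast

lemma good_noshare:
  assumes "good V E x y X" "(p,q) \<in> E" "(p',q') \<in> E"
    "p \<noteq> p'" "p \<noteq> q'" "q \<noteq> p'" "q \<noteq> q'"
    "real_of_int (y p) \<le> t" "t \<le> y q" "y p' \<le> t" "t \<le> y q'"
  shows "X (p,q) t \<noteq> X (p',q') t"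
  using good_meet[OF assms(1,2,3)] assms(4-) by blast

lemma sign_const:
  fixes f g :: "real \<Rightarrow> real"
  assumes cf: "continuous_on {a..b} f" and cg: "continuous_on {a..b} g"
    and ne: "\<forall>t\<in>{a..b}. f t \<noteq> g t" and s: "s \<in> {a..b}" "f s < g s" and t: "t \<in> {a..b}"
  shows "f t < g t"
proof (rule ccontr)
  assume "\<not> f t < g t"
  then have ht: "g t - f t \<le> 0" by simp
  have hs: "0 \<le> g s - f s" using s by simp
  have ch: "continuous_on {a..b} (\<lambda>t. g t - f t)" using cf cg by (intro continuous_intros)
  show False
  proof (cases "t \<le> s")
    case True
    have "continuous_on {t..s} (\<lambda>t. g t - f t)" by (rule continuous_on_subset[OF ch]) (use s t in auto)
    then obtain z where "t \<le> z" "z \<le> s" "g z - f z = 0" using IVT'[of "\<lambda>t. g t - f t" t 0 s] ht hs True by auto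
    moreover have "z \<in> {a..b}" using calculation s t by auto
    ultimately have "z \<in> {a..b}" "f z = g z" by auto
    then show False using ne by blast
  next
    case False
    have "continuous_on {s..t} (\<lambda>t. g t - f t)" by (rule continuous_on_subset[OF ch]) (use s t in auto)
    then obtain z where "s \<le> z" "z \<le> t" "g z - f z = 0" using IVT2'[of "\<lambda>t. g t - f t" t 0 s] ht hs False by auto
    moreover have "z \<in> {a..b}" using calculation s t by auto
    ultimately have "z \<in> {a..b}" "f z = g z" by auto
    then show False using ne by blast
  qed
qed

definition ordl :: "('a\<times>'a \<Rightarrow> real \<Rightarrow> real) \<Rightarrow> ('a \<Rightarrow> int) \<Rightarrow> 'a \<Rightarrow> 'a \<Rightarrow> 'a \<Rightarrow> bool" where
"ordl X y s a b \<longleftrightarrow> (\<forall>t. real_of_int (y s) < t \<and> t \<le> real_of_int (min (y a) (y b)) \<longrightarrow> X (s,a) t < X (s,b) t)"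

lemma ord_irrefl:
  assumes "good V E x y X" "(s,a) \<in> E"
  shows "\<not> ordl X y s a a"
  using good_edge[OF assms] unfolding ordl_def by (metis less_irrefl min.idem of_int_less_iff order_refl)

lemma ord_asym:
  assumes "good V E x y X" "(s,a) \<in> E" "(s,b) \<in> E" "ordl X y s a b"
  shows "\<not> ordl X y s b a"
proof
  assume "ordl X y s b a"
  have "y s < min (y a) (y b)" using good_edge(1)[OF assms(1,2)] good_edge(1)[OF assms(1,3)] by simp
  then have "real_of_int (y s) < real_of_int (min (y a) (y b))" by linarith
  then show False using assms(4) \<open>ordl X y s b a\<close> unfolding ordl_def
    by (metis min.commute order_refl less_asym)
qed

lemma ord_total:
  assumes G: "good V E x y X" and e1: "(s,a) \<in> E" and e2: "(s,b) \<in> E" and ne: "a \<noteq> b"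
  shows "ordl X y s a b \<or> ordl X y s b a"
proof -
  define t0 where "t0 = real_of_int (min (y a) (y b))"
  note E1 = good_edge[OF G e1] and E2 = good_edge[OF G e2]
  have t0a: "t0 \<le> y a" "t0 \<le> y b" "y s < t0" using E1(1) E2(1) unfolding t0_def by auto
  have neq: "X (s,a) t \<noteq> X (s,b) t" if "y s < t" "t \<le> t0" for t :: real
  proof
    assume eq: "X (s,a) t = X (s,b) t"
    have "(s,a) \<noteq> (s,b)" using ne by simp
    from good_meet[OF G e1 e2 this _ _ _ _ eq] that t0a obtain v where
      "(v = s \<or> v = a) \<and> (v = s \<or> v = b) \<and> real_of_int (y v) = t" by force
    then show False using that ne by auto
  qed
  have side: "X (s,a) t < X (s,b) t" if lt: "X (s,a) t0 < X (s,b) t0" "y s < t" "t \<le> t0" for t :: real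
  proof (rule sign_const[of t t0 "X (s,a)" "X (s,b)" t0])
    show "continuous_on {t..t0} (X (s, a))" using E1(2) by (rule continuous_on_subset) (use that t0a in auto)
    show "continuous_on {t..t0} (X (s, b))" using E2(2) by (rule continuous_on_subset) (use that t0a in auto)
    show "\<forall>z\<in>{t..t0}. X (s, a) z \<noteq> X (s, b) z" using neq that by auto
  qed (use that in auto)
  have side2: "X (s,b) t < X (s,a) t" if lt: "X (s,b) t0 < X (s,a) t0" "y s < t" "t \<le> t0" for t :: real
  proof (rule sign_const[of t t0 "X (s,b)" "X (s,a)" t0])
    show "continuous_on {t..t0} (X (s, a))" using E1(2) by (rule continuous_on_subset) (use that t0a in auto)
    show "continuous_on {t..t0} (X (s, b))" using E2(2) by (rule continuous_on_subset) (use that t0a in auto)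
    show "\<forall>z\<in>{t..t0}. X (s, b) z \<noteq> X (s, a) z" using neq that by (metis atLeastAtMost_iff less_le_trans)
  qed (use that in auto)
  have "X (s,a) t0 \<noteq> X (s,b) t0" using neq t0a by auto
  then consider "X (s,a) t0 < X (s,b) t0" | "X (s,b) t0 < X (s,a) t0" by linarith
  then show ?thesis
  proof cases
    case 1 then show ?thesis using side unfolding ordl_def t0_def by (metis min.commute)
  next
    case 2 then show ?thesis using side2 unfolding ordl_def t0_def by (metis min.commute)
  qed
qed

lemma ord_trans:
  assumes G: "good V E x y X" and e: "(s,a) \<in> E" "(s,b) \<in> E" "(s,c) \<in> E"
    and ab: "ordl X y s a b" and bc: "ordl X y s b c"
  shows "ordl X y s a c"
proof -
  have "a \<noteq> c" using ord_asym[OF G e(1,2) ab] bc by auto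
  moreover have "\<not> ordl X y s c a"
  proof
    assume ca: "ordl X y s c a"
    define t where "t = real_of_int (min (y a) (min (y b) (y c)))"
    have "y s < y a" "y s < y b" "y s < y c" using good_edge(1)[OF G] e by auto
    then have "real_of_int (y s) < t" unfolding t_def by simp
    moreover have "t \<le> real_of_int (min (y a) (y b))" "t \<le> real_of_int (min (y b) (y c))"
       "t \<le> real_of_int (min (y c) (y a))" unfolding t_def by auto
    ultimately show False using ab bc ca unfolding ordl_def by (meson less_trans less_asym)
  qed
  ultimately show ?thesis using ord_total[OF G e(1,3)] by blast
qed

lemma sink_between:
  assumes G: "good V E x y X" and w1: "(s,a1) \<in> E" and w2: "(s,a2) \<in> E" and e: "(z,g) \<in> E"
    and ns: "z \<noteq> s" "z \<noteq> a1" "z \<noteq> a2" "g \<noteq> s" "g \<noteq> a1" "g \<noteq> a2"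
    and h: "y g \<le> y a1" "y g \<le> y a2" "y s < y g"
    and b1: "X (s,a1) (y g) < x g" and b2: "x g < X (s,a2) (y g)"
  shows "y s < y z"
proof (rule ccontr)
  assume "\<not> y s < y z"
  then have zs: "y z \<le> y s" by simp
  note E1 = good_edge[OF G w1] and E2 = good_edge[OF G w2] and E3 = good_edge[OF G e]
  let ?I = "{real_of_int (y s)..real_of_int (y g)}"
  have c1: "continuous_on ?I (X (s,a1))" using E1(2) by (rule continuous_on_subset) (use h in auto)
  have c2: "continuous_on ?I (X (s,a2))" using E2(2) by (rule continuous_on_subset) (use h in auto)
  have c3: "continuous_on ?I (X (z,g))" using E3(2) by (rule continuous_on_subset) (use zs in auto)
  have n1: "\<forall>t\<in>?I. X (s,a1) t \<noteq> X (z,g) t"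
    using good_noshare[OF G w1 e] ns h zs by (smt (verit) atLeastAtMost_iff of_int_le_iff)
  have n2: "\<forall>t\<in>?I. X (z,g) t \<noteq> X (s,a2) t"
    using good_noshare[OF G e w2] ns h zs by (smt (verit) atLeastAtMost_iff of_int_le_iff)
  have gI: "real_of_int (y g) \<in> ?I" "real_of_int (y s) \<in> ?I" using h by auto
  have "X (s,a1) (y s) < X (z,g) (y s)"
    by (rule sign_const[OF c1 c3 n1 gI(1)]) (use b1 E3 gI in auto)
  moreover have "X (z,g) (y s) < X (s,a2) (y s)"
    by (rule sign_const[OF c3 c2 n2 gI(1)]) (use b2 E3 gI in auto)
  ultimately show False using E1(3) E2(3) by simp
qed

lemma src_between:
  assumes G: "good V E x y X" and w1: "(s,a1) \<in> E" and w2: "(s,a2) \<in> E" and e: "(z,g) \<in> E"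
    and ns: "z \<noteq> s" "z \<noteq> a1" "z \<noteq> a2" "g \<noteq> s" "g \<noteq> a1" "g \<noteq> a2"
    and h: "y g \<le> y a1" "y g \<le> y a2" "y s < y z"
    and b1: "X (s,a1) (y z) < x z" and b2: "x z < X (s,a2) (y z)"
  shows "X (s,a1) (y g) < x g \<and> x g < X (s,a2) (y g)"
proof -
  note E1 = good_edge[OF G w1] and E2 = good_edge[OF G w2] and E3 = good_edge[OF G e]
  let ?I = "{real_of_int (y z)..real_of_int (y g)}"
  have c1: "continuous_on ?I (X (s,a1))" using E1(2) by (rule continuous_on_subset) (use h in auto)
  have c2: "continuous_on ?I (X (s,a2))" using E2(2) by (rule continuous_on_subset) (use h in auto)
  have c3: "continuous_on ?I (X (z,g))" using E3(2) .
  have n1: "\<forall>t\<in>?I. X (s,a1) t \<noteq> X (z,g) t"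
    using good_noshare[OF G w1 e] ns h E3(1) by (smt (verit) atLeastAtMost_iff of_int_le_iff)
  have n2: "\<forall>t\<in>?I. X (z,g) t \<noteq> X (s,a2) t"
    using good_noshare[OF G e w2] ns h E3(1) by (smt (verit) atLeastAtMost_iff of_int_le_iff)
  have gI: "real_of_int (y g) \<in> ?I" "real_of_int (y z) \<in> ?I" using E3(1) by auto
  have "X (s,a1) (y g) < X (z,g) (y g)"
    by (rule sign_const[OF c1 c3 n1 gI(2)]) (use b1 E3 gI in auto)
  moreover have "X (z,g) (y g) < X (s,a2) (y g)"
    by (rule sign_const[OF c3 c2 n2 gI(2)]) (use b2 E3 gI in auto)
  ultimately show ?thesis using E3(4) by simp
qed

lemma trap_B:
  assumes G: "good V E x y X" and P: "paths_at_most_one E"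
    and e: "(s,c) \<in> E" "(s,a1) \<in> E" "(s,a2) \<in> E"
    and o1: "ordl X y s a1 c" and o2: "ordl X y s c a2"
    and h: "y c \<le> y a1" "y c \<le> y a2"
    and z: "(z,c) \<in> E"
  shows "z = s \<or> y s < y z"
proof (cases "z = s")
  case zs: False
  have ne1: "a1 \<noteq> c" using ord_irrefl[OF G e(1)] o1 by auto
  have ne2: "a2 \<noteq> c" using ord_irrefl[OF G e(1)] o2 by auto
  have za: "z \<noteq> a1" "z \<noteq> a2" using P e z unfolding paths_at_most_one_def by blast+
  have ysc: "y s < y c" using good_edge(1)[OF G e(1)] .
  have cs: "c \<noteq> s" using ysc by auto
  have "X (s,a1) (y c) < X (s,c) (y c)" using o1 ysc h unfolding ordl_def by simp
  moreover have "X (s,c) (y c) < X (s,a2) (y c)" using o2 ysc h unfolding ordl_def by simp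
  ultimately show ?thesis
    using sink_between[OF G e(2) e(3) z zs za cs ne1[symmetric] ne2[symmetric] h ysc] good_edge(4)[OF G e(1)]
    by simp
qed simp

definition rX :: "('a\<times>'a \<Rightarrow> real \<Rightarrow> real) \<Rightarrow> ('a\<times>'a \<Rightarrow> real \<Rightarrow> real)" where
"rX X = (\<lambda>e t. X (snd e, fst e) (- t))"

lemma good_reflect:
  assumes G: "good V E x y X"
  shows "good V (E\<inverse>) x (\<lambda>v. - y v) (rX X)"
  unfolding good_def
proof (intro conjI allI impI)
  fix p q assume "(p,q) \<in> E\<inverse>"
  then have e: "(q,p) \<in> E" by simp
  note E = good_edge[OF G e]
  show "- y p < - y q" using E by simp
  show "rX X (p, q) (real_of_int (- y p)) = x p" "rX X (p, q) (real_of_int (- y q)) = x q"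
    using E unfolding rX_def by auto
  have "continuous_on {real_of_int (- y p)..real_of_int (- y q)} (\<lambda>t. X (q,p) (- t))"
    by (rule continuous_on_compose2[OF E(2)]) (auto intro: continuous_intros)
  then show "continuous_on {real_of_int (- y p)..real_of_int (- y q)} (rX X (p, q))"
    unfolding rX_def by simp
next
  fix p q p' q' and t :: real
  assume e1: "(p,q) \<in> E\<inverse>" and e2: "(p',q') \<in> E\<inverse>" and ne: "(p,q) \<noteq> (p',q')"
    and t: "real_of_int (- y p) \<le> t" "t \<le> real_of_int (- y q)" "real_of_int (- y p') \<le> t" "t \<le> real_of_int (- y q')"
    and eq: "rX X (p, q) t = rX X (p', q') t"
  have "(q,p) \<in> E" "(q',p') \<in> E" "(q,p) \<noteq> (q',p')" using e1 e2 ne by auto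
  from good_meet[OF G this, of "-t"] t eq obtain v where
    "(v = q \<or> v = p) \<and> (v = q' \<or> v = p') \<and> real_of_int (y v) = - t" unfolding rX_def by force
  then show "\<exists>v. (v = p \<or> v = q) \<and> (v = p' \<or> v = q') \<and> real_of_int (- y v) = t" by auto
qed

definition Lrec :: "('b \<Rightarrow> 'b \<Rightarrow> bool) \<Rightarrow> ('b \<Rightarrow> int) \<Rightarrow> 'b set \<Rightarrow> 'b set" where
"Lrec r h A = {a\<in>A. \<forall>b\<in>A. r b a \<longrightarrow> h b < h a}"
definition Rrec :: "('b \<Rightarrow> 'b \<Rightarrow> bool) \<Rightarrow> ('b \<Rightarrow> int) \<Rightarrow> 'b set \<Rightarrow> 'b set" where
"Rrec r h A = {a\<in>A. \<forall>b\<in>A. r a b \<longrightarrow> h b < h a}"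
definition trapped :: "('b \<Rightarrow> 'b \<Rightarrow> bool) \<Rightarrow> ('b \<Rightarrow> int) \<Rightarrow> 'b set \<Rightarrow> 'b \<Rightarrow> bool" where
"trapped r h A a \<longleftrightarrow> (\<exists>b1\<in>A. \<exists>b2\<in>A. r b1 a \<and> r a b2 \<and> h a \<le> h b1 \<and> h a \<le> h b2)"

lemma notrap_cover:
  assumes "\<forall>a\<in>A. \<not> trapped r h A a"
  shows "A \<subseteq> Lrec r h A \<union> Rrec r h A"
  using assms unfolding trapped_def Lrec_def Rrec_def by (auto simp: not_le)

lemma inj_L:
  assumes tot: "\<forall>a\<in>A. \<forall>b\<in>A. a \<noteq> b \<longrightarrow> r a b \<or> r b a"
  shows "inj_on h (Lrec r h A)"
  unfolding inj_on_def Lrec_def using tot by (metis (no_types, lifting) mem_Collect_eq order_less_irrefl)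

lemma inj_R:
  assumes tot: "\<forall>a\<in>A. \<forall>b\<in>A. a \<noteq> b \<longrightarrow> r a b \<or> r b a"
  shows "inj_on h (Rrec r h A)"
  unfolding inj_on_def Rrec_def using tot by (metis (no_types, lifting) mem_Collect_eq order_less_irrefl)

lemma card_L_le:
  assumes tot: "\<forall>a\<in>A. \<forall>b\<in>A. a \<noteq> b \<longrightarrow> r a b \<or> r b a" and S: "h ` A \<subseteq> S" "finite S"
  shows "card (Lrec r h A) \<le> card S" "card (Rrec r h A) \<le> card S"
proof -
  show "card (Lrec r h A) \<le> card S"
    by (rule card_inj_on_le[OF inj_L[OF tot] _ S(2)]) (use S(1) in \<open>auto simp: Lrec_def\<close>)
  show "card (Rrec r h A) \<le> card S"
    by (rule card_inj_on_le[OF inj_R[OF tot] _ S(2)]) (use S(1) in \<open>auto simp: Rrec_def\<close>)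
qed

lemma LR_fin:
  assumes "finite A"
  shows "finite (Lrec r h A)" "finite (Rrec r h A)"
  using assms unfolding Lrec_def Rrec_def by auto

lemma count_simple:
  assumes fin: "finite A" and tot: "\<forall>a\<in>A. \<forall>b\<in>A. a \<noteq> b \<longrightarrow> r a b \<or> r b a"
    and nt: "\<forall>a\<in>A. \<not> trapped r h A a" and S: "h ` A \<subseteq> {lo+1..lo+int k}"
  shows "card A \<le> 2 * k"
proof -
  have "card A \<le> card (Lrec r h A \<union> Rrec r h A)"
    by (rule card_mono) (use notrap_cover[OF nt] LR_fin[OF fin] in auto)
  also have "\<dots> \<le> card (Lrec r h A) + card (Rrec r h A)" by (rule card_Un_le)
  also have "\<dots> \<le> k + k" using card_L_le[OF tot S] by simp
  finally show ?thesis by simp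
qed

lemma count_chain:
  assumes fin: "finite A" and tot: "\<forall>a\<in>A. \<forall>b\<in>A. a \<noteq> b \<longrightarrow> r a b \<or> r b a"
    and irr: "\<forall>a\<in>A. \<not> r a a"
    and nt: "\<forall>a\<in>A. \<not> trapped r h A a" and S: "h ` A \<subseteq> {lo+1..lo+int n}"
    and top: "\<forall>a\<in>A. \<forall>b\<in>A. h a = lo + int n \<longrightarrow> h b = lo + int n \<longrightarrow> a = b"
    and n: "n \<ge> 1"
  shows "card A \<le> 2 * n - 1"
proof (cases "\<exists>a\<in>A. h a = lo + int n")
  case True
  then obtain a where a: "a \<in> A" "h a = lo + int n" by blast
  have lt: "h b < h a" if "b \<in> A" "b \<noteq> a" for b
  proof -
    have "h b \<le> lo + int n" using S that by auto
    moreover have "h b \<noteq> lo + int n" using top a that by auto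
    ultimately show ?thesis using a by simp
  qed
  have aLR: "a \<in> Lrec r h A \<inter> Rrec r h A"
    using a lt irr unfolding Lrec_def Rrec_def by auto
  have f: "finite (Lrec r h A)" "finite (Rrec r h A)" using LR_fin[OF fin] by auto
  have "card A \<le> card (Lrec r h A \<union> Rrec r h A)"
    by (rule card_mono) (use notrap_cover[OF nt] f in auto)
  moreover have "card (Lrec r h A \<union> Rrec r h A) + card (Lrec r h A \<inter> Rrec r h A) = card (Lrec r h A) + card (Rrec r h A)"
    using card_Un_Int[OF f] by simp
  moreover have "card (Lrec r h A \<inter> Rrec r h A) \<ge> 1"
    using aLR f by (metis One_nat_def Suc_leI card_gt_0_iff empty_iff finite_Int)
  moreover have "card (Lrec r h A) \<le> n" "card (Rrec r h A) \<le> n" using card_L_le[OF tot S] by auto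
  ultimately show ?thesis by linarith
next
  case False
  then have S': "h ` A \<subseteq> {lo+1..lo+int (n-1)}" using S n by force
  have "card A \<le> 2 * (n - 1)" by (rule count_simple[OF fin tot nt S'])
  then show ?thesis using n by simp
qed

lemma perfect:
  assumes fin: "finite A" and tot: "\<forall>a\<in>A. \<forall>b\<in>A. a \<noteq> b \<longrightarrow> r a b \<or> r b a"
    and nt: "\<forall>a\<in>A. \<not> trapped r h A a" and S: "h ` A \<subseteq> {lo+1..lo+int k}"
    and c: "card A \<ge> 2 * k"
  shows "h ` Lrec r h A = {lo+1..lo+int k}" "h ` Rrec r h A = {lo+1..lo+int k}"
    "Lrec r h A \<inter> Rrec r h A = {}"
proof -
  have f: "finite (Lrec r h A)" "finite (Rrec r h A)" using LR_fin[OF fin] by auto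
  have "card A \<le> card (Lrec r h A \<union> Rrec r h A)"
    by (rule card_mono) (use notrap_cover[OF nt] f in auto)
  moreover have "card (Lrec r h A \<union> Rrec r h A) + card (Lrec r h A \<inter> Rrec r h A) = card (Lrec r h A) + card (Rrec r h A)"
    using card_Un_Int[OF f] by simp
  moreover have cs: "card {lo+1..lo+int k} = k" by simp
  moreover have "card (Lrec r h A) \<le> k" "card (Rrec r h A) \<le> k" using card_L_le[OF tot S] cs by auto
  ultimately have cL: "card (Lrec r h A) = k" and cR: "card (Rrec r h A) = k"
    and cI: "card (Lrec r h A \<inter> Rrec r h A) = 0" using c by linarith+
  show "Lrec r h A \<inter> Rrec r h A = {}" using cI f by simp
  show "h ` Lrec r h A = {lo+1..lo+int k}"
  proof (rule card_subset_eq)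
    show "h ` Lrec r h A \<subseteq> {lo + 1..lo + int k}" using S by (auto simp: Lrec_def)
    show "card (h ` Lrec r h A) = card {lo + 1..lo + int k}"
      using card_image[OF inj_L[OF tot]] cL cs by simp
  qed simp
  show "h ` Rrec r h A = {lo+1..lo+int k}"
  proof (rule card_subset_eq)
    show "h ` Rrec r h A \<subseteq> {lo + 1..lo + int k}" using S by (auto simp: Rrec_def)
    show "card (h ` Rrec r h A) = card {lo + 1..lo + int k}"
      using card_image[OF inj_R[OF tot]] cR cs by simp
  qed simp
qed

definition nbrs :: "('a\<times>'a) set \<Rightarrow> 'a \<Rightarrow> 'a set" where
"nbrs E v = {z. (v,z) \<in> E \<or> (z,v) \<in> E}"

definition strct :: "'a set \<Rightarrow> ('a\<times>'a) set \<Rightarrow> ('a \<Rightarrow> nat) \<Rightarrow> nat \<Rightarrow> bool" where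
"strct V E ht d \<longleftrightarrow> finite V \<and> E \<subseteq> V \<times> V \<and> paths_at_most_one E \<and> 1 \<le> d \<and>
   (\<forall>v\<in>V. 1 \<le> ht v \<longrightarrow> d \<le> card (nbrs E v)) \<and> (\<forall>v z. (v,z) \<in> E \<or> (z,v) \<in> E \<longrightarrow> ht v \<le> ht z + 1)"

lemma nbrs_reflect: "nbrs (E\<inverse>) = nbrs E"
  unfolding nbrs_def by auto

lemma strct_reflect: "strct V E ht d \<Longrightarrow> strct V (E\<inverse>) ht d"
  unfolding strct_def nbrs_reflect unfolding paths_at_most_one_def by blast

lemma tail_nbrs:
  assumes "strct V E ht d" "(s,q0) \<in> E"
  shows "nbrs E s = {q. (s,q) \<in> E}"
  using assms unfolding strct_def paths_at_most_one_def nbrs_def by blast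

lemma outs_card:
  assumes S: "strct V E ht d" and e: "(s,q0) \<in> E" and h: "1 \<le> ht s"
  shows "d \<le> card {q. (s,q) \<in> E}" "finite {q. (s,q) \<in> E}"
proof -
  have sV: "s \<in> V" using S e unfolding strct_def by blast
  show "d \<le> card {q. (s,q) \<in> E}" using S h sV tail_nbrs[OF S e] unfolding strct_def by metis
  have "{q. (s,q) \<in> E} \<subseteq> V" using S unfolding strct_def by blast
  then show "finite {q. (s,q) \<in> E}" using S unfolding strct_def by (metis finite_subset)
qed

lemma ord_props:
  assumes G: "good V E x y X"
  shows "\<forall>a\<in>{q. (s,q) \<in> E}. \<forall>b\<in>{q. (s,q) \<in> E}. a \<noteq> b \<longrightarrow> ordl X y s a b \<or> ordl X y s b a"
    "\<forall>a\<in>{q. (s,q) \<in> E}. \<not> ordl X y s a a"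
  using ord_total[OF G] ord_irrefl[OF G] by blast+

lemma chain:
  fixes n :: nat
  shows "good V E x y X \<Longrightarrow> strct V E ht d \<Longrightarrow> (s,q0) \<in> E \<Longrightarrow>
    (\<forall>q. (s,q) \<in> E \<longrightarrow> q = t \<or> y q < y t) \<Longrightarrow> y t - y s = int n \<Longrightarrow> 2*n \<le> d \<Longrightarrow> n + 1 \<le> ht s \<Longrightarrow> False"
proof (induction n arbitrary: E y X s t q0 rule: less_induct)
  case (less n)
  note G = less.prems(1) and S = less.prems(2) and e0 = less.prems(3) and At = less.prems(4)
    and w = less.prems(5) and dn = less.prems(6) and hs = less.prems(7)
  let ?A = "{q. (s,q) \<in> E}"
  have cA: "d \<le> card ?A" and fA: "finite ?A" using outs_card[OF S e0] hs by auto
  have d1: "1 \<le> d" using S unfolding strct_def by blast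
  note OP = ord_props[OF G, of s]
  have yq: "y s < y q" if "q \<in> ?A" for q using good_edge(1)[OF G] that by simp
  have n1: "n \<ge> 1"
  proof (rule ccontr)
    assume "\<not> n \<ge> 1"
    then have "y t = y s" using w by simp
    then have "?A = {}" using At yq by fastforce
    then show False using cA d1 by simp
  qed
  have Sr: "y ` ?A \<subseteq> {y s + 1..y s + int n}"
  proof
    fix v assume "v \<in> y ` ?A"
    then obtain q where q: "q \<in> ?A" "v = y q" by blast
    have "y q \<le> y t" using At q by fastforce
    then show "v \<in> {y s + 1..y s + int n}" using yq[OF q(1)] q w by auto
  qed
  have att: "a = t" if "a \<in> ?A" "y a = y s + int n" for a
  proof -
    from At that(1) have "a = t \<or> y a < y t" by simp
    with that(2) w show ?thesis by auto
  qed
  have top: "\<forall>a\<in>?A. \<forall>b\<in>?A. y a = y s + int n \<longrightarrow> y b = y s + int n \<longrightarrow> a = b"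
    using att by blast
  have "\<exists>c\<in>?A. trapped (ordl X y s) y ?A c"
  proof (rule ccontr)
    assume "\<not> ?thesis"
    then have "card ?A \<le> 2 * n - 1" using count_chain[OF fA OP(1) OP(2) _ Sr top n1] by blast
    then show False using cA dn n1 by linarith
  qed
  then obtain c a1 a2 where c: "(s,c) \<in> E" and a: "(s,a1) \<in> E" "(s,a2) \<in> E"
    and o: "ordl X y s a1 c" "ordl X y s c a2" and hc: "y c \<le> y a1" "y c \<le> y a2"
    unfolding trapped_def by blast
  have B: "\<forall>z. (z,c) \<in> E \<longrightarrow> z = s \<or> y s < y z" using trap_B[OF G _ c a o hc] S unfolding strct_def by blast
  have "c \<noteq> t"
  proof
    assume "c = t"
    have "a1 \<noteq> c" using o(1) ord_irrefl[OF G c] by auto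
    then have "y a1 < y t" using At a \<open>c = t\<close> by blast
    then show False using hc \<open>c = t\<close> by simp
  qed
  then have yct: "y c < y t" using At c by blast
  define n' where "n' = nat (y c - y s)"
  have n'n: "n' < n" and wn': "y c - y s = int n'" using yct yq[of c] c w unfolding n'_def by auto
  have htc: "ht s \<le> ht c + 1" using S c unfolding strct_def by blast
  show False
  proof (rule less.IH[OF n'n])
    show "good V (E\<inverse>) x (\<lambda>v. - y v) (rX X)" by (rule good_reflect[OF G])
    show "strct V (E\<inverse>) ht d" by (rule strct_reflect[OF S])
    show "(c, s) \<in> E\<inverse>" using c by simp
    show "\<forall>q. (c, q) \<in> E\<inverse> \<longrightarrow> q = s \<or> - y q < - y s" using B by auto
    show "- y s - - y c = int n'" using wn' by simp
    show "2 * n' \<le> d" using dn n'n by simp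
    show "n' + 1 \<le> ht c" using hs htc n'n by simp
  qed
qed

lemma chainB:
  assumes G: "good V E x y X" and S: "strct V E ht d" and e: "(z0,g) \<in> E"
    and B: "\<forall>z. (z,g) \<in> E \<longrightarrow> z = u \<or> y u < y z" and w: "y g - y u = int n"
    and dn: "2*n \<le> d" and h: "n + 1 \<le> ht g"
  shows False
proof (rule chain[OF good_reflect[OF G] strct_reflect[OF S]])
  show "(g, z0) \<in> E\<inverse>" using e by simp
  show "\<forall>q. (g, q) \<in> E\<inverse> \<longrightarrow> q = u \<or> - y q < - y u" using B by auto
  show "- y u - - y g = int n" using w by simp
qed (use dn h in auto)

lemma start_trap:
  assumes G: "good V E x y X" and S: "strct V E ht d"
    and tr: "trapped (ordl X y s) y {q. (s,q) \<in> E} c" and c: "(s,c) \<in> E"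
    and k: "y c - y s \<le> int k" and dk: "2*k \<le> d" and h: "k + 2 \<le> ht s"
  shows False
proof -
  obtain a1 a2 where a: "(s,a1) \<in> E" "(s,a2) \<in> E"
    and o: "ordl X y s a1 c" "ordl X y s c a2" and hc: "y c \<le> y a1" "y c \<le> y a2"
    using tr unfolding trapped_def by blast
  have B: "\<forall>z. (z,c) \<in> E \<longrightarrow> z = s \<or> y s < y z" using trap_B[OF G _ c a o hc] S unfolding strct_def by blast
  have htc: "ht s \<le> ht c + 1" using S c unfolding strct_def by blast
  have ysc: "y s < y c" using good_edge(1)[OF G c] .
  show False
    by (rule chainB[OF G S c B, of "nat (y c - y s)"]) (use ysc k dk h htc in auto)
qed

lemma F_lemma:
  assumes G: "good V E x y X" and P: "paths_at_most_one E"
    and w1: "(u,a) \<in> E" and w2: "(u,a') \<in> E" and o1: "ordl X y u a a'" and ha: "y a \<le> y a'"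
    and ne: "a \<noteq> a'"
    and z: "(z,a) \<in> E" and o: "ordl (rX X) (\<lambda>v. - y v) a u z"
  shows "y u < y z \<and> X (u,a) (y z) < x z \<and> x z < X (u,a') (y z)"
proof -
  have G': "good V (E\<inverse>) x (\<lambda>v. - y v) (rX X)" by (rule good_reflect[OF G])
  have zu: "z \<noteq> u" using ord_irrefl[OF G', of a u] w1 o by auto
  have za': "z \<noteq> a'" using P w2 z unfolding paths_at_most_one_def by blast
  note E1 = good_edge[OF G w1] and E2 = good_edge[OF G w2] and E3 = good_edge[OF G z]
  have au: "a \<noteq> u" using E1(1) by auto
  have lt1: "X (u,a) t < X (z,a) t" if "real_of_int (max (y u) (y z)) \<le> t" "t < y a" for t :: real
  proof -
    have "- real_of_int (y a) < - t" "- t \<le> real_of_int (min (- y u) (- y z))" using that by auto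
    then have "rX X (a,u) (- t) < rX X (a,z) (- t)" using o unfolding ordl_def by simp
    then show ?thesis unfolding rX_def by simp
  qed
  let ?I = "{real_of_int (max (y u) (y z))..real_of_int (y a)}"
  have ms: "max (y u) (y z) < y a" using E1(1) E3(1) by simp
  have c3: "continuous_on ?I (X (z,a))" using E3(2) by (rule continuous_on_subset) auto
  have c2: "continuous_on ?I (X (u,a'))" using E2(2) by (rule continuous_on_subset) (use ha in auto)
  have n2: "\<forall>t\<in>?I. X (z,a) t \<noteq> X (u,a') t"
  proof
    fix t assume t: "t \<in> ?I"
    show "X (z,a) t \<noteq> X (u,a') t"
      by (rule good_noshare[OF G z w2 zu za' au ne]) (use t ha in auto)
  qed
  have at: "X (u,a) (y a) < X (u,a') (y a)" using o1 E1(1) ha unfolding ordl_def by simp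
  have Z: "X (z,a) t < X (u,a') t" if "t \<in> ?I" for t
    by (rule sign_const[OF c3 c2 n2 _ _ that, of "real_of_int (y a)"]) (use ms E3(4) E1(4) at in auto)
  have yzu: "y u < y z"
  proof (rule ccontr)
    assume "\<not> y u < y z"
    then have m: "max (y u) (y z) = y u" by simp
    have "X (u,a) (y u) < X (z,a) (y u)" using lt1[of "real_of_int (y u)"] m E1(1) by simp
    moreover have "X (z,a) (y u) < X (u,a') (y u)" using Z[of "real_of_int (y u)"] m E1(1) by simp
    ultimately show False using E1(3) E2(3) by simp
  qed
  then have m: "max (y u) (y z) = y z" by simp
  have "X (u,a) (y z) < X (z,a) (y z)" using lt1[of "real_of_int (y z)"] m E3(1) by simp
  moreover have "X (z,a) (y z) < X (u,a') (y z)" using Z[of "real_of_int (y z)"] m E3(1) by simp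
  ultimately show ?thesis using yzu E3(3) by simp
qed

theorem lower_bound:
  assumes G: "good V E x y X" and S: "strct V E ht d"
    and C4: "\<forall>u a b g. ((u,a)\<in>E \<or> (a,u)\<in>E) \<longrightarrow> ((a,b)\<in>E \<or> (b,a)\<in>E) \<longrightarrow> ((b,g)\<in>E \<or> (g,b)\<in>E)
              \<longrightarrow> ((g,u)\<in>E \<or> (u,g)\<in>E) \<longrightarrow> u \<noteq> b \<longrightarrow> a \<noteq> g \<longrightarrow> False"
    and r: "(u,q0) \<in> E" and k: "1 \<le> k" and dk: "d = 2*k \<or> d = 2*k+1" and ev: "d = 2*k \<Longrightarrow> 2 \<le> k"
    and h: "k + 5 \<le> ht u" and span: "\<forall>p q. (p,q) \<in> E \<longrightarrow> y q - y p \<le> int k"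
  shows False
proof -
  have P: "paths_at_most_one E" using S unfolding strct_def by blast
  have hadj: "ht v \<le> ht z + 1" if "(v,z) \<in> E \<or> (z,v) \<in> E" for v z using S that unfolding strct_def by blast
  let ?A = "{q. (u,q) \<in> E}"
  have cA: "d \<le> card ?A" and fA: "finite ?A" using outs_card[OF S r] h by auto
  note OP = ord_props[OF G, of u]
  have Sr: "y ` ?A \<subseteq> {y u + 1..y u + int k}"
    using span good_edge(1)[OF G] by fastforce
  show False
  proof (cases "\<exists>c\<in>?A. trapped (ordl X y u) y ?A c")
    case True
    then obtain c where c: "(u,c) \<in> E" "trapped (ordl X y u) y ?A c" by blast
    show False by (rule start_trap[OF G S c(2) c(1), of k]) (use span dk h c in auto)
  next
    case False
    then have nt: "\<forall>c\<in>?A. \<not> trapped (ordl X y u) y ?A c" by blast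
    show False
    proof (cases "d = 2*k")
      case False
      then have "d = 2*k+1" using dk by simp
      moreover have "card ?A \<le> 2*k" by (rule count_simple[OF fA OP(1) nt Sr])
      ultimately show False using cA by simp
    next
      case True
      have k2: "2 \<le> k" using ev True by simp
      note PF = perfect[OF fA OP(1) nt Sr cA[unfolded True]]
      have "y u + int k \<in> y ` Lrec (ordl X y u) y ?A" "y u + int k \<in> y ` Rrec (ordl X y u) y ?A"
        using PF(1,2) cA True k by auto
      then obtain a1 a2 where a1: "a1 \<in> Lrec (ordl X y u) y ?A" "y a1 = y u + int k"
        and a2: "a2 \<in> Rrec (ordl X y u) y ?A" "y a2 = y u + int k" by auto
      have "a1 \<noteq> a2" using a1 a2 PF(3) by auto
      moreover have "(u,a1) \<in> E" "(u,a2) \<in> E" using a1 a2 unfolding Lrec_def Rrec_def by auto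
      ultimately obtain a a' where wa: "(u,a) \<in> E" and wa': "(u,a') \<in> E" and oaa: "ordl X y u a a'"
        and ya: "y a = y u + int k" and ya': "y a' = y u + int k"
        using ord_total[OF G] a1(2) a2(2) by metis
      have aa': "a \<noteq> a'" using oaa ord_irrefl[OF G wa] by auto
      have G': "good V (E\<inverse>) x (\<lambda>v. - y v) (rX X)" by (rule good_reflect[OF G])
      have S': "strct V (E\<inverse>) ht d" by (rule strct_reflect[OF S])
      let ?y' = "\<lambda>v. - y v" and ?X' = "rX X"
      let ?B = "{z. (a,z) \<in> E\<inverse>}"
      have au': "(a,u) \<in> E\<inverse>" using wa by simp
      have hta: "k + 4 \<le> ht a" using hadj[of u a] wa h by auto
      have cB: "d \<le> card ?B" and fB: "finite ?B" using outs_card[OF S' au'] hta by auto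
      note OP' = ord_props[OF G', of a]
      have SB: "?y' ` ?B \<subseteq> {?y' a + 1..?y' a + int k}"
        using span good_edge(1)[OF G] by fastforce
      show False
      proof (cases "\<exists>c\<in>?B. trapped (ordl ?X' ?y' a) ?y' ?B c")
        case True
        then obtain c where c: "(a,c) \<in> E\<inverse>" "trapped (ordl ?X' ?y' a) ?y' ?B c" by blast
        show False by (rule start_trap[OF G' S' c(2) c(1), of k]) (use span dk h hta True c in auto)
      next
        case False
        then have ntB: "\<forall>c\<in>?B. \<not> trapped (ordl ?X' ?y' a) ?y' ?B c" by blast
        note PB = perfect[OF fB OP'(1) ntB SB cB[unfolded True]]
        let ?L' = "Lrec (ordl ?X' ?y' a) ?y' ?B" and ?R' = "Rrec (ordl ?X' ?y' a) ?y' ?B"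
        have F: "y u < y z \<and> X (u,a) (y z) < x z \<and> x z < X (u,a') (y z)"
          if "(z,a) \<in> E" "ordl ?X' ?y' a u z" for z
          by (rule F_lemma[OF G P wa wa' oaa _ aa' that]) (use ya ya' in simp)
        have "?y' a + int k \<in> ?y' ` ?L'" "?y' a + int k \<in> ?y' ` ?R'"
          using PB(1,2) cB True k by auto
        then obtain z1 z2 where z1: "z1 \<in> ?L'" "?y' z1 = ?y' a + int k"
          and z2: "z2 \<in> ?R'" "?y' z2 = ?y' a + int k" by auto
        have "z1 \<noteq> z2" using z1 z2 PB(3) by auto
        then obtain z where z: "(z,a) \<in> E" "z \<noteq> u" "y z = y u"
          using z1 z2 ya unfolding Lrec_def Rrec_def by auto
        have uB: "u \<in> ?B" using wa by simp
        have "ordl ?X' ?y' a z u"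
        proof -
          have "ordl ?X' ?y' a u z \<or> ordl ?X' ?y' a z u" using OP'(1) uB z by auto
          moreover have "\<not> ordl ?X' ?y' a u z" using F[OF z(1)] z(3) by auto
          ultimately show ?thesis by blast
        qed
        then have "u \<notin> ?L'" using z unfolding Lrec_def by auto
        then have uR: "u \<in> ?R'" using notrap_cover[OF ntB] uB by blast
        have "?y' a + 1 \<in> ?y' ` ?R'" using PB(2) k by auto
        then obtain b where b: "b \<in> ?R'" "?y' b = ?y' a + 1" by auto
        have bB: "(b,a) \<in> E" using b unfolding Rrec_def by auto
        have yb: "y b = y a - 1" using b by simp
        have bu: "b \<noteq> u" using yb ya k2 by auto
        have "\<not> ordl ?X' ?y' a b u"
        proof
          assume "ordl ?X' ?y' a b u"
          then have "?y' u < ?y' b" using b uB unfolding Rrec_def by auto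
          then show False using yb ya k2 by simp
        qed
        then have "ordl ?X' ?y' a u b" using OP'(1) uB bB bu by auto
        from F[OF bB this] have yub: "y u < y b" and bt1: "X (u,a) (y b) < x b"
          and bt2: "x b < X (u,a') (y b)" by auto
        have htb: "k + 3 \<le> ht b" using hadj[of a b] bB hta by auto
        let ?C = "{q. (b,q) \<in> E}"
        have cC: "d \<le> card ?C" and fC: "finite ?C" using outs_card[OF S bB] htb by auto
        note OPb = ord_props[OF G, of b]
        have SC: "y ` ?C \<subseteq> {y b + 1..y b + int k}"
          using span good_edge(1)[OF G] by fastforce
        show False
        proof (cases "\<exists>c\<in>?C. trapped (ordl X y b) y ?C c")
          case True
          then obtain c where c: "(b,c) \<in> E" "trapped (ordl X y b) y ?C c" by blast
          show False by (rule start_trap[OF G S c(2) c(1), of k]) (use span dk htb True c in auto)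
        next
          case False
          then have ntC: "\<forall>c\<in>?C. \<not> trapped (ordl X y b) y ?C c" by blast
          note PC = perfect[OF fC OPb(1) ntC SC cC[unfolded True]]
          have "y b + 1 \<in> y ` Lrec (ordl X y b) y ?C" "y b + 1 \<in> y ` Rrec (ordl X y b) y ?C"
            using PC(1,2) cC True k by auto
          then obtain g1 g2 where g1: "g1 \<in> Lrec (ordl X y b) y ?C" "y g1 = y b + 1"
            and g2: "g2 \<in> Rrec (ordl X y b) y ?C" "y g2 = y b + 1" by auto
          have "g1 \<noteq> g2" using g1 g2 PC(3) by auto
          then obtain g where bg: "(b,g) \<in> E" and ga: "g \<noteq> a" and yg: "y g = y a"
            using g1 g2 yb unfolding Lrec_def Rrec_def by auto
          have ga': "g \<noteq> a'"
          proof
            assume "g = a'"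
            then show False using C4 wa bB bg wa' bu aa' by blast
          qed
          have ba: "b \<noteq> a" "b \<noteq> a'" using P bB wa' good_edge(1)[OF G bB] unfolding paths_at_most_one_def by auto
          have gu: "g \<noteq> u" using yg ya k by auto
          have gb: "X (u,a) (y g) < x g \<and> x g < X (u,a') (y g)"
            by (rule src_between[OF G wa wa' bg bu ba gu ga ga']) (use yg ya ya' yub bt1 bt2 in auto)
          have Bg: "\<forall>z. (z,g) \<in> E \<longrightarrow> z = u \<or> y u < y z"
          proof (intro allI impI)
            fix z assume zg: "(z,g) \<in> E"
            show "z = u \<or> y u < y z"
            proof (cases "z = u")
              case False
              have "z \<noteq> a" "z \<noteq> a'" using P zg wa wa' unfolding paths_at_most_one_def by auto
              then show ?thesis
                using sink_between[OF G wa wa' zg False _ _ gu ga ga'] gb yg ya ya' k by auto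
            qed simp
          qed
          have htg: "k + 2 \<le> ht g" using hadj[of b g] bg htb by auto
          show False by (rule chainB[OF G S bg Bg, of k]) (use yg ya True htg in auto)
        qed
      qed
    qed
  qed
qed

definition shiftE :: "nat \<Rightarrow> (nat\<times>nat) set \<Rightarrow> (nat\<times>nat) set" where
"shiftE k E = (\<lambda>(a,b). (a+k, b+k)) ` E"

lemma mem_shiftE: "(a,b) \<in> shiftE k E \<longleftrightarrow> k \<le> a \<and> k \<le> b \<and> (a-k, b-k) \<in> E"
proof
  assume "(a,b) \<in> shiftE k E"
  then obtain p where p: "p \<in> E" "(a,b) = (\<lambda>(a,b). (a+k, b+k)) p" unfolding shiftE_def by (rule imageE)
  obtain a0 b0 where "p = (a0,b0)" by (cases p)
  then have "(a0,b0) \<in> E" "a = a0 + k" "b = b0 + k" using p by auto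
  then show "k \<le> a \<and> k \<le> b \<and> (a-k, b-k) \<in> E" by simp
next
  assume R: "k \<le> a \<and> k \<le> b \<and> (a-k, b-k) \<in> E"
  have "(a,b) = (\<lambda>(a,b). (a+k, b+k)) (a-k, b-k)" using R by simp
  then show "(a,b) \<in> shiftE k E" unfolding shiftE_def using R by blast
qed

definition lam :: "(nat\<times>nat) set \<Rightarrow> bool" where
"lam E \<longleftrightarrow> (\<forall>a b a' b'. (a,b) \<in> E \<longrightarrow> (a',b') \<in> E \<longrightarrow> \<not> (a < a' \<and> a' < b \<and> b < b'))"

definition C4 :: "('a\<times>'a) set \<Rightarrow> bool" where
"C4 E \<longleftrightarrow> (\<forall>u a b g. ((u,a)\<in>E \<or> (a,u)\<in>E) \<longrightarrow> ((a,b)\<in>E \<or> (b,a)\<in>E) \<longrightarrow> ((b,g)\<in>E \<or> (g,b)\<in>E)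
              \<longrightarrow> ((g,u)\<in>E \<or> (u,g)\<in>E) \<longrightarrow> u \<noteq> b \<longrightarrow> a \<noteq> g \<longrightarrow> False)"

definition Base :: "nat \<Rightarrow> (nat\<times>nat) set \<Rightarrow> bool" where
"Base n E \<longleftrightarrow> 1 \<le> n \<and> (\<forall>a b. (a,b) \<in> E \<longrightarrow> a < b \<and> b < n) \<and> lam E \<and> paths_at_most_one E \<and>
   (\<forall>a. (a,0) \<notin> E) \<and> (\<forall>b. (n-1,b) \<notin> E) \<and> finite E \<and> card E + 1 = n \<and>
   (\<forall>v<n. \<forall>w<n. (v,w) \<in> (E \<union> E\<inverse>)\<^sup>*) \<and> C4 E"

definition glueE :: "nat \<Rightarrow> (nat\<times>nat) set \<Rightarrow> nat \<Rightarrow> (nat\<times>nat) set \<Rightarrow> (nat\<times>nat) set" where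
"glueE nP FP nQ FQ = FP \<union> shiftE nP FQ \<union> {(0, nP + nQ - 1)}"

lemma mem_glueE: "(a,b) \<in> glueE nP FP nQ FQ \<longleftrightarrow> (a,b) \<in> FP \<or> (nP \<le> a \<and> nP \<le> b \<and> (a-nP, b-nP) \<in> FQ) \<or> (a = 0 \<and> b = nP + nQ - 1)"
  unfolding glueE_def Un_iff mem_shiftE by blast

lemma rtrancl_shift:
  assumes "(x,y) \<in> R\<^sup>*"
  shows "(x+k, y+k) \<in> ((\<lambda>(a,b). (a+k, b+k)) ` R)\<^sup>*"
  using assms
proof (induction rule: rtrancl_induct)
  case base then show ?case by simp
next
  case (step y z)
  have "(y+k, z+k) \<in> (\<lambda>(a,b). (a+k, b+k)) ` R" by (rule image_eqI[where x="(y,z)"]) (use step(2) in auto)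
  then show ?case using step(3) by (meson rtrancl.rtrancl_into_rtrancl)
qed

lemma glue_base:
  assumes P: "Base nP FP" and Q: "Base nQ FQ"
  shows "Base (nP + nQ) (glueE nP FP nQ FQ)"
proof -
  let ?G = "glueE nP FP nQ FQ" and ?N = "nP + nQ"
  note M = mem_glueE
  have P1: "1 \<le> nP" and Pr: "\<And>a b. (a,b) \<in> FP \<Longrightarrow> a < b \<and> b < nP" and Pl: "lam FP"
    and Pp: "paths_at_most_one FP" and P0: "\<And>a. (a,0) \<notin> FP" and Pn: "\<And>b. (nP-1,b) \<notin> FP"
    and Pf: "finite FP" and Pc: "card FP + 1 = nP" and Pconn: "\<forall>v<nP. \<forall>w<nP. (v,w) \<in> (FP \<union> FP\<inverse>)\<^sup>*"
    and P4: "C4 FP"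
    using P unfolding Base_def by blast+
  have Q1: "1 \<le> nQ" and Qr: "\<And>a b. (a,b) \<in> FQ \<Longrightarrow> a < b \<and> b < nQ" and Ql: "lam FQ"
    and Qp: "paths_at_most_one FQ" and Q0: "\<And>a. (a,0) \<notin> FQ" and Qn: "\<And>b. (nQ-1,b) \<notin> FQ"
    and Qf: "finite FQ" and Qc: "card FQ + 1 = nQ" and Qconn: "\<forall>v<nQ. \<forall>w<nQ. (v,w) \<in> (FQ \<union> FQ\<inverse>)\<^sup>*"
    and Q4: "C4 FQ"
    using Q unfolding Base_def by blast+
  have range: "a < b \<and> b < ?N" if "(a,b) \<in> ?G" for a b
    using that Pr Qr P1 Q1 unfolding M by fastforce
  have cs: "(a,b) \<in> FP \<or> (nP \<le> a \<and> nP \<le> b \<and> (a-nP,b-nP) \<in> FQ) \<or> (a = 0 \<and> b = ?N - 1)"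
    if "(a,b) \<in> ?G" for a b using that unfolding M by blast
  have lamG: "lam ?G"
    unfolding lam_def
  proof (intro allI impI notI)
    fix a b a' b' assume e1: "(a,b) \<in> ?G" and e2: "(a',b') \<in> ?G" and i: "a < a' \<and> a' < b \<and> b < b'"
    have r1: "b' < ?N" using range[OF e2] by simp
    from cs[OF e1] show False
    proof (elim disjE conjE)
      assume p1: "(a,b) \<in> FP"
      from cs[OF e2] show False
      proof (elim disjE conjE)
        assume "(a',b') \<in> FP" then show False using p1 i Pl unfolding lam_def by blast
      next
        assume "nP \<le> a'" then show False using Pr[OF p1] i by simp
      next
        assume "a' = 0" then show False using i by simp
      qed
    next
      assume q1: "nP \<le> a" "nP \<le> b" "(a-nP,b-nP) \<in> FQ"
      from cs[OF e2] show False
      proof (elim disjE conjE)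
        assume "(a',b') \<in> FP" then show False using Pr[of a' b'] i q1 by simp
      next
        assume q2: "nP \<le> a'" "nP \<le> b'" "(a'-nP,b'-nP) \<in> FQ"
        have "a - nP < a' - nP \<and> a' - nP < b - nP \<and> b - nP < b' - nP" using i q1 q2 by auto
        then show False using q1 q2 Ql unfolding lam_def by blast
      next
        assume "a' = 0" then show False using i by simp
      qed
    next
      assume "a = 0" "b = ?N - 1" then show False using i r1 P1 by linarith
    qed
  qed
  have pathsG: "paths_at_most_one ?G"
    unfolding paths_at_most_one_def
  proof (intro allI impI notI)
    fix u v w assume e1: "(u,v) \<in> ?G" and e2: "(v,w) \<in> ?G"
    have vpos: "0 < v" using range[OF e1] by simp
    from cs[OF e1] show False
    proof (elim disjE conjE)
      assume p1: "(u,v) \<in> FP"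
      from cs[OF e2] show False
      proof (elim disjE conjE)
        assume "(v,w) \<in> FP" then show False using p1 Pp unfolding paths_at_most_one_def by blast
      next
        assume "nP \<le> v" then show False using Pr[OF p1] by simp
      next
        assume "v = 0" then show False using vpos by simp
      qed
    next
      assume q1: "nP \<le> u" "nP \<le> v" "(u-nP,v-nP) \<in> FQ"
      from cs[OF e2] show False
      proof (elim disjE conjE)
        assume "(v,w) \<in> FP" then show False using Pr[of v w] q1 by simp
      next
        assume q2: "nP \<le> v" "nP \<le> w" "(v-nP,w-nP) \<in> FQ"
        then show False using q1 Qp unfolding paths_at_most_one_def by blast
      next
        assume "v = 0" then show False using vpos by simp
      qed
    next
      assume n1: "u = 0" "v = ?N - 1"
      from cs[OF e2] show False
      proof (elim disjE conjE)
        assume "(v,w) \<in> FP" then show False using Pr[of v w] n1 Q1 by linarith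
      next
        assume q2: "nP \<le> v" "nP \<le> w" "(v-nP,w-nP) \<in> FQ"
        have "v - nP = nQ - 1" using n1 Q1 by simp
        then show False using q2 Qn by metis
      next
        assume "v = 0" then show False using n1 P1 Q1 by simp
      qed
    qed
  qed
  have G0: "(a,0) \<notin> ?G" for a using P0 P1 Q1 unfolding M by auto
  have GN: "(?N-1,b) \<notin> ?G" for b
  proof
    assume "(?N-1,b) \<in> ?G"
    then show False unfolding M using Pr[of "?N-1" b] Qn[of "b - nP"] P1 Q1 by auto
  qed
  have fG: "finite ?G" using Pf Qf unfolding glueE_def shiftE_def by auto
  have cG: "card ?G + 1 = ?N"
  proof -
    have nin: "(a,b) \<notin> shiftE nP FQ" if "(a,b) \<in> FP" for a b using Pr[OF that] by (simp add: mem_shiftE)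
    have d1: "FP \<inter> shiftE nP FQ = {}" using nin by auto
    have d2a: "(0, ?N - 1) \<notin> FP" using Pr[of 0 "?N - 1"] Q1 by linarith
    have d2b: "(0, ?N - 1) \<notin> shiftE nP FQ" using P1 by (simp add: mem_shiftE)
    have d2: "(0, ?N - 1) \<notin> FP \<union> shiftE nP FQ" using d2a d2b by blast
    have cs: "card (shiftE nP FQ) = card FQ"
      unfolding shiftE_def by (rule card_image) (auto simp: inj_on_def)
    have fs: "finite (shiftE nP FQ)" using Qf unfolding shiftE_def by auto
    have "card ?G = card (FP \<union> shiftE nP FQ) + 1"
      unfolding glueE_def using d2 fs Pf by simp
    also have "\<dots> = card FP + card FQ + 1" using card_Un_disjoint[OF Pf fs d1] cs by simp
    finally show ?thesis using Pc Qc by simp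
  qed
  have connG: "\<forall>v<?N. \<forall>w<?N. (v,w) \<in> (?G \<union> ?G\<inverse>)\<^sup>*"
  proof -
    let ?S = "?G \<union> ?G\<inverse>"
    have sP: "(v,w) \<in> ?S\<^sup>*" if "v < nP" "w < nP" for v w
    proof -
      have "(v,w) \<in> (FP \<union> FP\<inverse>)\<^sup>*" using Pconn that by blast
      moreover have "FP \<union> FP\<inverse> \<subseteq> ?S" unfolding glueE_def by auto
      ultimately show ?thesis using rtrancl_mono by blast
    qed
    have sQ: "(v + nP, w + nP) \<in> ?S\<^sup>*" if "v < nQ" "w < nQ" for v w
    proof -
      have "(v,w) \<in> (FQ \<union> FQ\<inverse>)\<^sup>*" using Qconn that by blast
      then have "(v + nP, w + nP) \<in> ((\<lambda>(a,b). (a+nP, b+nP)) ` (FQ \<union> FQ\<inverse>))\<^sup>*" by (rule rtrancl_shift)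
      moreover have "(\<lambda>(a,b). (a+nP, b+nP)) ` (FQ \<union> FQ\<inverse>) \<subseteq> ?S"
        unfolding glueE_def shiftE_def by auto
      ultimately show ?thesis using rtrancl_mono by blast
    qed
    have br: "(0, ?N - 1) \<in> ?S" "(?N - 1, 0) \<in> ?S" unfolding glueE_def by auto
    have toP: "(v, 0) \<in> ?S\<^sup>*" if "v < ?N" for v
    proof (cases "v < nP")
      case True then show ?thesis using sP P1 by simp
    next
      case False
      then have "(v - nP + nP, nQ - 1 + nP) \<in> ?S\<^sup>*" using sQ[of "v - nP" "nQ - 1"] that Q1 by simp
      then have "(v, ?N - 1) \<in> ?S\<^sup>*" using False Q1 by (simp add: add.commute)
      then show ?thesis using br by (meson rtrancl.rtrancl_into_rtrancl)
    qed
    have symS: "(a, b) \<in> ?S\<^sup>* \<Longrightarrow> (b, a) \<in> ?S\<^sup>*" for a b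
    proof -
      assume "(a, b) \<in> ?S\<^sup>*"
      then have "(b, a) \<in> (?S\<inverse>)\<^sup>*" by (rule rtrancl_converseI)
      moreover have "?S\<inverse> = ?S" by auto
      ultimately show ?thesis by simp
    qed
    show ?thesis using toP symS by (meson rtrancl_trans)
  qed
  have c4G: "C4 ?G"
    unfolding C4_def
  proof (intro allI impI)
    fix u a b g
    assume h1: "(u,a)\<in>?G \<or> (a,u)\<in>?G" and h2: "(a,b)\<in>?G \<or> (b,a)\<in>?G" and h3: "(b,g)\<in>?G \<or> (g,b)\<in>?G"
      and h4: "(g,u)\<in>?G \<or> (u,g)\<in>?G" and ub: "u \<noteq> b" and ag: "a \<noteq> g"
    define br where "br v w = (v = 0 \<and> w = ?N - 1 \<or> v = ?N - 1 \<and> w = 0)" for v w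
    have adjc: "br v w \<or> (v < nP \<and> w < nP \<and> ((v,w) \<in> FP \<or> (w,v) \<in> FP)) \<or>
       (nP \<le> v \<and> nP \<le> w \<and> ((v-nP,w-nP) \<in> FQ \<or> (w-nP,v-nP) \<in> FQ))"
      if "(v,w) \<in> ?G \<or> (w,v) \<in> ?G" for v w
    proof -
      from that show ?thesis
      proof
        assume e: "(v,w) \<in> ?G"
        from cs[OF e] show ?thesis
        proof (elim disjE conjE)
          assume "(v,w) \<in> FP" then show ?thesis using Pr[of v w] by simp
        next
          assume "nP \<le> v" "nP \<le> w" "(v-nP,w-nP) \<in> FQ" then show ?thesis by simp
        next
          assume "v = 0" "w = ?N - 1" then show ?thesis unfolding br_def by simp
        qed
      next
        assume e: "(w,v) \<in> ?G"
        from cs[OF e] show ?thesis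
        proof (elim disjE conjE)
          assume "(w,v) \<in> FP" then show ?thesis using Pr[of w v] by simp
        next
          assume "nP \<le> w" "nP \<le> v" "(w-nP,v-nP) \<in> FQ" then show ?thesis by simp
        next
          assume "w = 0" "v = ?N - 1" then show ?thesis unfolding br_def by auto
        qed
      qed
    qed
    have brs: "(v < nP) \<noteq> (w < nP)" if "br v w" for v w
      using that P1 Q1 unfolding br_def by auto
    have nl: "v \<noteq> w" if "(v,w) \<in> ?G \<or> (w,v) \<in> ?G" for v w using range that by fastforce
    have n1: "u \<noteq> a" "a \<noteq> b" "b \<noteq> g" "g \<noteq> u" using nl[OF h1] nl[OF h2] nl[OF h3] nl[OF h4] by auto
    have brE: "v = 0 \<and> w = ?N - 1 \<or> v = ?N - 1 \<and> w = 0" if "br v w" for v w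
      using that unfolding br_def by auto
    have one: "\<not> (br u a \<and> br a b)" "\<not> (br u a \<and> br b g)" "\<not> (br u a \<and> br g u)"
       "\<not> (br a b \<and> br b g)" "\<not> (br a b \<and> br g u)" "\<not> (br b g \<and> br g u)"
      using n1 ub ag unfolding br_def by auto
    have same: "(v < nP) = (w < nP)" if "(v,w) \<in> ?G \<or> (w,v) \<in> ?G" "\<not> br v w" for v w
    proof -
      have "(v < nP \<and> w < nP) \<or> (nP \<le> v \<and> nP \<le> w)" using adjc[OF that(1)] that(2) by blast
      then show ?thesis by linarith
    qed
    have inP: "(v,w) \<in> FP \<or> (w,v) \<in> FP" if "(v,w) \<in> ?G \<or> (w,v) \<in> ?G" "\<not> br v w" "v < nP" for v w
    proof -
      have "\<not> nP \<le> v" using that(3) by simp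
      then show ?thesis using adjc[OF that(1)] that(2) by blast
    qed
    have inQ: "(v-nP,w-nP) \<in> FQ \<or> (w-nP,v-nP) \<in> FQ" if "(v,w) \<in> ?G \<or> (w,v) \<in> ?G" "\<not> br v w" "\<not> v < nP" for v w
      using adjc[OF that(1)] that(2,3) by blast
    show False
    proof (cases "br u a \<or> br a b \<or> br b g \<or> br g u")
      case True
      then show False
      proof (elim disjE)
        assume "br u a"
        then have "\<not> br a b" "\<not> br b g" "\<not> br g u" "(u < nP) \<noteq> (a < nP)" using one brs by auto
        then show False using same[OF h2] same[OF h3] same[OF h4] by blast
      next
        assume "br a b"
        then have "\<not> br u a" "\<not> br b g" "\<not> br g u" "(a < nP) \<noteq> (b < nP)" using one brs by auto
        then show False using same[OF h1] same[OF h3] same[OF h4] by blast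
      next
        assume "br b g"
        then have "\<not> br u a" "\<not> br a b" "\<not> br g u" "(b < nP) \<noteq> (g < nP)" using one brs by auto
        then show False using same[OF h1] same[OF h2] same[OF h4] by blast
      next
        assume "br g u"
        then have "\<not> br u a" "\<not> br a b" "\<not> br b g" "(g < nP) \<noteq> (u < nP)" using one brs by auto
        then show False using same[OF h1] same[OF h2] same[OF h3] by blast
      qed
    next
      case False
      then have nb: "\<not> br u a" "\<not> br a b" "\<not> br b g" "\<not> br g u" by auto
      have sides: "(u < nP) = (a < nP)" "(a < nP) = (b < nP)" "(b < nP) = (g < nP)"
        using same[OF h1 nb(1)] same[OF h2 nb(2)] same[OF h3 nb(3)] by auto
      show False
      proof (cases "u < nP")
        case True
        then have "a < nP" "b < nP" "g < nP" using sides by auto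
        then have "((u,a)\<in>FP \<or> (a,u)\<in>FP)" "((a,b)\<in>FP \<or> (b,a)\<in>FP)" "((b,g)\<in>FP \<or> (g,b)\<in>FP)"
            "((g,u)\<in>FP \<or> (u,g)\<in>FP)"
          using inP[OF h1 nb(1) True] inP[OF h2 nb(2)] inP[OF h3 nb(3)] inP[OF h4 nb(4)] by auto
        then show False using P4 ub ag unfolding C4_def by blast
      next
        case False
        then have s: "\<not> a < nP" "\<not> b < nP" "\<not> g < nP" using sides by auto
        then have "((u-nP,a-nP)\<in>FQ \<or> (a-nP,u-nP)\<in>FQ)" "((a-nP,b-nP)\<in>FQ \<or> (b-nP,a-nP)\<in>FQ)"
          "((b-nP,g-nP)\<in>FQ \<or> (g-nP,b-nP)\<in>FQ)" "((g-nP,u-nP)\<in>FQ \<or> (u-nP,g-nP)\<in>FQ)"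
          using inQ[OF h1 nb(1) False] inQ[OF h2 nb(2)] inQ[OF h3 nb(3)] inQ[OF h4 nb(4)] by auto
        moreover have "u - nP \<noteq> b - nP" "a - nP \<noteq> g - nP" using s False ub ag by auto
        ultimately show False using Q4 unfolding C4_def by blast
      qed
    qed
  qed
  have N1: "1 \<le> ?N" using P1 by simp
  have r': "\<forall>a b. (a,b) \<in> ?G \<longrightarrow> a < b \<and> b < ?N" using range by blast
  have G0': "\<forall>a. (a,0) \<notin> ?G" using G0 by blast
  have GN': "\<forall>b. (?N-1,b) \<notin> ?G" using GN by blast
  show ?thesis unfolding Base_def using N1 r' lamG pathsG G0' GN' fG cG connG c4G by (intro conjI) assumption+
qed

definition gh :: "nat \<Rightarrow> (nat \<Rightarrow> nat) \<Rightarrow> (nat \<Rightarrow> nat) \<Rightarrow> nat \<Rightarrow> nat" where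
"gh nP hP hQ p = (if p < nP then hP p else hQ (p - nP))"

definition HtI :: "(nat\<times>nat) set \<Rightarrow> (nat \<Rightarrow> nat) \<Rightarrow> bool" where
"HtI E ht \<longleftrightarrow> (\<forall>a b. (a,b) \<in> E \<longrightarrow> ht a = ht b + 1 \<or> ht b = ht a + 1)"

definition Deg :: "nat \<Rightarrow> nat \<Rightarrow> (nat\<times>nat) set \<Rightarrow> (nat \<Rightarrow> nat) \<Rightarrow> nat \<Rightarrow> nat \<Rightarrow> bool" where
"Deg q n E ht t m \<longleftrightarrow> card (nbrs E t) = m \<and>
   (\<forall>v<n. v \<noteq> t \<longrightarrow> card (nbrs E v) = (if ht v = 0 then 1 else Suc q))"

lemma Base_range: "Base n E \<Longrightarrow> (a,b) \<in> E \<Longrightarrow> a < b \<and> b < n"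
  unfolding Base_def by blast

lemma Base_n: "Base n E \<Longrightarrow> 1 \<le> n"
  unfolding Base_def by blast

lemma cs_glue:
  assumes "(a,b) \<in> glueE nP FP nQ FQ"
  shows "(a,b) \<in> FP \<or> (nP \<le> a \<and> nP \<le> b \<and> (a-nP,b-nP) \<in> FQ) \<or> (a = 0 \<and> b = nP + nQ - 1)"
  using assms unfolding mem_glueE by blast

lemma glue_ht:
  assumes P: "Base nP FP" and Q: "Base nQ FQ" and hp: "HtI FP hP" and hq: "HtI FQ hQ"
    and t: "hP 0 = hQ (nQ-1) + 1 \<or> hQ (nQ-1) = hP 0 + 1"
  shows "HtI (glueE nP FP nQ FQ) (gh nP hP hQ)"
  unfolding HtI_def
proof (intro allI impI)
  fix a b assume e: "(a,b) \<in> glueE nP FP nQ FQ"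
  have P1: "1 \<le> nP" and Q1: "1 \<le> nQ" using Base_n[OF P] Base_n[OF Q] .
  from cs_glue[OF e] show "gh nP hP hQ a = gh nP hP hQ b + 1 \<or> gh nP hP hQ b = gh nP hP hQ a + 1"
  proof (elim disjE conjE)
    assume e1: "(a,b) \<in> FP"
    then have "a < nP" "b < nP" using Base_range[OF P e1] by auto
    then show ?thesis using hp e1 unfolding HtI_def gh_def by simp
  next
    assume e1: "nP \<le> a" "nP \<le> b" "(a-nP,b-nP) \<in> FQ"
    then show ?thesis using hq unfolding HtI_def gh_def by simp
  next
    assume "a = 0" "b = nP + nQ - 1"
    then show ?thesis using t P1 Q1 unfolding gh_def by auto
  qed
qed

lemma nbrs_fin:
  assumes "Base n E"
  shows "finite (nbrs E v)" "nbrs E v \<subseteq> {0..<n}"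
proof -
  show "nbrs E v \<subseteq> {0..<n}" using Base_range[OF assms] unfolding nbrs_def by fastforce
  then show "finite (nbrs E v)" using finite_subset by blast
qed

lemma glue_nbrs_P:
  assumes P: "Base nP FP" and Q: "Base nQ FQ" and v: "v < nP"
  shows "nbrs (glueE nP FP nQ FQ) v = nbrs FP v \<union> (if v = 0 then {nP + nQ - 1} else {})"
proof -
  have P1: "1 \<le> nP" and Q1: "1 \<le> nQ" using Base_n[OF P] Base_n[OF Q] .
  show ?thesis
  proof (rule set_eqI)
    fix z
    show "z \<in> nbrs (glueE nP FP nQ FQ) v \<longleftrightarrow> z \<in> nbrs FP v \<union> (if v = 0 then {nP + nQ - 1} else {})"
      unfolding nbrs_def mem_glueE using v P1 Q1 by auto
  qed
qed

lemma glue_nbrs_Q: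
  assumes P: "Base nP FP" and Q: "Base nQ FQ" and v: "nP \<le> v" "v < nP + nQ"
  shows "nbrs (glueE nP FP nQ FQ) v = (\<lambda>z. z + nP) ` nbrs FQ (v - nP) \<union> (if v = nP + nQ - 1 then {0} else {})"
proof -
  have P1: "1 \<le> nP" and Q1: "1 \<le> nQ" using Base_n[OF P] Base_n[OF Q] .
  have nP: "(v,z) \<notin> FP" "(z,v) \<notin> FP" for z using Base_range[OF P, of v z] Base_range[OF P, of z v] v by auto
  show ?thesis
  proof (rule set_eqI)
    fix z
    have "z \<in> (\<lambda>z. z + nP) ` nbrs FQ (v - nP) \<longleftrightarrow> nP \<le> z \<and> ((v-nP, z-nP) \<in> FQ \<or> (z-nP, v-nP) \<in> FQ)"
    proof
      assume "z \<in> (\<lambda>z. z + nP) ` nbrs FQ (v - nP)"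
      then obtain z0 where "z = z0 + nP" "z0 \<in> nbrs FQ (v - nP)" by blast
      then show "nP \<le> z \<and> ((v-nP, z-nP) \<in> FQ \<or> (z-nP, v-nP) \<in> FQ)" unfolding nbrs_def by auto
    next
      assume a: "nP \<le> z \<and> ((v-nP, z-nP) \<in> FQ \<or> (z-nP, v-nP) \<in> FQ)"
      then have "z - nP \<in> nbrs FQ (v - nP)" "z = (z - nP) + nP" unfolding nbrs_def by auto
      then show "z \<in> (\<lambda>z. z + nP) ` nbrs FQ (v - nP)" by blast
    qed
    then show "z \<in> nbrs (glueE nP FP nQ FQ) v \<longleftrightarrow> z \<in> (\<lambda>z. z + nP) ` nbrs FQ (v - nP) \<union> (if v = nP + nQ - 1 then {0} else {})"
      unfolding nbrs_def mem_glueE using v P1 Q1 nP by auto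
  qed
qed

lemma glue_card_P:
  assumes P: "Base nP FP" and Q: "Base nQ FQ" and v: "v < nP"
  shows "card (nbrs (glueE nP FP nQ FQ) v) = card (nbrs FP v) + (if v = 0 then 1 else 0)"
proof -
  have Q1: "1 \<le> nQ" using Base_n[OF Q] .
  have "nP + nQ - 1 \<notin> nbrs FP v" using nbrs_fin(2)[OF P, of v] Q1 by auto
  then show ?thesis unfolding glue_nbrs_P[OF P Q v] using nbrs_fin(1)[OF P, of v] by auto
qed

lemma glue_card_Q:
  assumes P: "Base nP FP" and Q: "Base nQ FQ" and v: "nP \<le> v" "v < nP + nQ"
  shows "card (nbrs (glueE nP FP nQ FQ) v) = card (nbrs FQ (v - nP)) + (if v = nP + nQ - 1 then 1 else 0)"
proof -
  have P1: "1 \<le> nP" using Base_n[OF P] .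
  have ni: "0 \<notin> (\<lambda>z. z + nP) ` nbrs FQ (v - nP)" using P1 by auto
  have ci: "card ((\<lambda>z. z + nP) ` nbrs FQ (v - nP)) = card (nbrs FQ (v - nP))"
    by (rule card_image) (auto simp: inj_on_def)
  have fi: "finite ((\<lambda>z. z + nP) ` nbrs FQ (v - nP))" using nbrs_fin(1)[OF Q] by blast
  show ?thesis unfolding glue_nbrs_Q[OF P Q v] using ni ci fi by auto
qed

lemma glue_deg_src:
  assumes P: "Base nP FP" and Q: "Base nQ FQ" and dP: "Deg q nP FP hP 0 mP"
    and dQ: "Deg q nQ FQ hQ (nQ-1) mQ" and mQ: "mQ = (if hQ (nQ-1) = 0 then 0 else q)"
  shows "Deg q (nP+nQ) (glueE nP FP nQ FQ) (gh nP hP hQ) 0 (Suc mP)"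
  unfolding Deg_def
proof (intro conjI allI impI)
  have P1: "1 \<le> nP" and Q1: "1 \<le> nQ" using Base_n[OF P] Base_n[OF Q] .
  show "card (nbrs (glueE nP FP nQ FQ) 0) = Suc mP"
    using glue_card_P[OF P Q, of 0] P1 dP unfolding Deg_def by simp
  fix v assume v: "v < nP + nQ" "v \<noteq> 0"
  show "card (nbrs (glueE nP FP nQ FQ) v) = (if gh nP hP hQ v = 0 then 1 else Suc q)"
  proof (cases "v < nP")
    case True
    then show ?thesis using glue_card_P[OF P Q True] dP v unfolding Deg_def gh_def by simp
  next
    case False
    then have c: "card (nbrs (glueE nP FP nQ FQ) v) = card (nbrs FQ (v - nP)) + (if v = nP + nQ - 1 then 1 else 0)"
      using glue_card_Q[OF P Q _ v(1)] by simp
    show ?thesis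
    proof (cases "v = nP + nQ - 1")
      case True
      then have "v - nP = nQ - 1" using Q1 by simp
      then show ?thesis using c True dQ mQ False unfolding Deg_def gh_def by simp
    next
      case F2: False
      then have "v - nP \<noteq> nQ - 1" "v - nP < nQ" using False v Q1 by auto
      then show ?thesis using c F2 dQ False unfolding Deg_def gh_def by simp
    qed
  qed
qed

lemma glue_deg_snk:
  assumes P: "Base nP FP" and Q: "Base nQ FQ" and dP: "Deg q nP FP hP 0 mP"
    and dQ: "Deg q nQ FQ hQ (nQ-1) mQ" and mP: "mP = (if hP 0 = 0 then 0 else q)"
  shows "Deg q (nP+nQ) (glueE nP FP nQ FQ) (gh nP hP hQ) (nP+nQ-1) (Suc mQ)"
  unfolding Deg_def
proof (intro conjI allI impI)
  have P1: "1 \<le> nP" and Q1: "1 \<le> nQ" using Base_n[OF P] Base_n[OF Q] .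
  have "nP + nQ - 1 - nP = nQ - 1" using Q1 by simp
  then show "card (nbrs (glueE nP FP nQ FQ) (nP+nQ-1)) = Suc mQ"
    using glue_card_Q[OF P Q, of "nP+nQ-1"] P1 Q1 dQ unfolding Deg_def by simp
  fix v assume v: "v < nP + nQ" "v \<noteq> nP + nQ - 1"
  show "card (nbrs (glueE nP FP nQ FQ) v) = (if gh nP hP hQ v = 0 then 1 else Suc q)"
  proof (cases "v < nP")
    case True
    show ?thesis
    proof (cases "v = 0")
      case True
      then show ?thesis using glue_card_P[OF P Q, of 0] P1 dP mP unfolding Deg_def gh_def by simp
    next
      case False
      then show ?thesis using glue_card_P[OF P Q \<open>v < nP\<close>] dP v \<open>v < nP\<close> unfolding Deg_def gh_def by simp
    qed
  next
    case False
    then have c: "card (nbrs (glueE nP FP nQ FQ) v) = card (nbrs FQ (v - nP))"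
      using glue_card_Q[OF P Q _ v(1)] v by simp
    have "v - nP \<noteq> nQ - 1" "v - nP < nQ" using False v Q1 by auto
    then show ?thesis using c dQ False unfolding Deg_def gh_def by simp
  qed
qed

definition glue :: "nat \<times> (nat\<times>nat) set \<times> (nat \<Rightarrow> nat) \<Rightarrow> nat \<times> (nat\<times>nat) set \<times> (nat \<Rightarrow> nat) \<Rightarrow> nat \<times> (nat\<times>nat) set \<times> (nat \<Rightarrow> nat)" where
"glue B1 B2 = (case B1 of (nP, FP, hP) \<Rightarrow> case B2 of (nQ, FQ, hQ) \<Rightarrow> (nP+nQ, glueE nP FP nQ FQ, gh nP hP hQ))"

function (sequential) blk :: "nat \<Rightarrow> bool \<Rightarrow> nat \<Rightarrow> nat \<Rightarrow> nat \<times> (nat\<times>nat) set \<times> (nat \<Rightarrow> nat)" where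
  "blk q b 0 m = (1, {}, \<lambda>_. 0)"
| "blk q b (Suc h) 0 = (1, {}, \<lambda>_. Suc h)"
| "blk q True (Suc h) (Suc m) = glue (blk q True (Suc h) m) (blk q False h q)"
| "blk q False (Suc h) (Suc m) = glue (blk q True h q) (blk q False (Suc h) m)"
  by pat_completeness auto
termination by (relation "measures [\<lambda>(q,b,h,m). h, \<lambda>(q,b,h,m). m]") auto

lemma single_ok: "Base 1 {} \<and> HtI {} ht \<and> Deg q 1 {} ht 0 0"
proof -
  have "Base 1 {}" unfolding Base_def lam_def C4_def paths_at_most_one_def by simp
  moreover have "HtI {} ht" unfolding HtI_def by simp
  moreover have "Deg q 1 {} ht 0 0" unfolding Deg_def nbrs_def by simp
  ultimately show ?thesis by simp
qed

lemma blk_inv: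
  "blk q b h m = (n, E, ht) \<Longrightarrow> Base n E \<and> HtI E ht \<and> ht (if b then 0 else n - 1) = h \<and>
     Deg q n E ht (if b then 0 else n - 1) (if h = 0 then 0 else m)"
proof (induction q b h m arbitrary: n E ht rule: blk.induct)
  case (1 q b m)
  then show ?case using single_ok by auto
next
  case (2 q b h)
  then show ?case using single_ok by auto
next
  case (3 q h m)
  obtain nP FP hP where bP: "blk q True (Suc h) m = (nP, FP, hP)" by (cases "blk q True (Suc h) m") auto
  obtain nQ FQ hQ where bQ: "blk q False h q = (nQ, FQ, hQ)" by (cases "blk q False h q") auto
  have IP: "Base nP FP" "HtI FP hP" "hP 0 = Suc h" "Deg q nP FP hP 0 m"
    using "3.IH"(1)[OF bP] by simp_all
  have IQ: "Base nQ FQ" "HtI FQ hQ" "hQ (nQ - 1) = h" "Deg q nQ FQ hQ (nQ - 1) (if h = 0 then 0 else q)"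
    using "3.IH"(2)[OF bQ] by simp_all
  have e: "n = nP + nQ" "E = glueE nP FP nQ FQ" "ht = gh nP hP hQ"
    using "3.prems" bP bQ by (auto simp: glue_def)
  have P1: "1 \<le> nP" using Base_n[OF IP(1)] .
  have B: "Base n E" unfolding e by (rule glue_base[OF IP(1) IQ(1)])
  have H: "HtI E ht" unfolding e by (rule glue_ht[OF IP(1) IQ(1) IP(2) IQ(2)]) (use IP(3) IQ(3) in simp)
  have T: "ht 0 = Suc h" unfolding e gh_def using IP(3) P1 by simp
  have D: "Deg q n E ht 0 (Suc m)" unfolding e
    by (rule glue_deg_src[OF IP(1) IQ(1) IP(4) IQ(4)]) (use IQ(3) in simp)
  show ?case using B H T D by simp
next
  case (4 q h m)
  obtain nP FP hP where bP: "blk q True h q = (nP, FP, hP)" by (cases "blk q True h q") auto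
  obtain nQ FQ hQ where bQ: "blk q False (Suc h) m = (nQ, FQ, hQ)" by (cases "blk q False (Suc h) m") auto
  have IP: "Base nP FP" "HtI FP hP" "hP 0 = h" "Deg q nP FP hP 0 (if h = 0 then 0 else q)"
    using "4.IH"(1)[OF bP] by simp_all
  have IQ: "Base nQ FQ" "HtI FQ hQ" "hQ (nQ - 1) = Suc h" "Deg q nQ FQ hQ (nQ - 1) m"
    using "4.IH"(2)[OF bQ] by simp_all
  have e: "n = nP + nQ" "E = glueE nP FP nQ FQ" "ht = gh nP hP hQ"
    using "4.prems" bP bQ by (auto simp: glue_def)
  have P1: "1 \<le> nP" using Base_n[OF IP(1)] .
  have Q1: "1 \<le> nQ" using Base_n[OF IQ(1)] .
  have B: "Base n E" unfolding e by (rule glue_base[OF IP(1) IQ(1)])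
  have H: "HtI E ht" unfolding e by (rule glue_ht[OF IP(1) IQ(1) IP(2) IQ(2)]) (use IP(3) IQ(3) in simp)
  have a1: "\<not> (nP + nQ - 1 < nP)" "nP + nQ - 1 - nP = nQ - 1" using Q1 by auto
  have T: "ht (n - 1) = Suc h" unfolding e gh_def using IQ(3) a1 by simp
  have D: "Deg q n E ht (n - 1) (Suc m)" unfolding e
    by (rule glue_deg_snk[OF IP(1) IQ(1) IP(4) IQ(4)]) (use IP(3) in simp)
  show ?case using B H T D by simp
qed

definition cc :: "nat \<times> nat \<Rightarrow> real \<Rightarrow> real \<times> real" where
"cc e s = (s * (1 - s) * (real (snd e) - real (fst e))^2, real (fst e) + s * (real (snd e) - real (fst e)))"

lemma nest:
  fixes a b a' b' t :: real
  assumes "a \<le> a'" "b' \<le> b" "a < a' \<or> b' < b" "a' < t" "t < b'"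
  shows "(t-a')*(b'-t) < (t-a)*(b-t)"
proof (cases "a < a'")
  case True
  have "(t-a')*(b'-t) < (t-a)*(b'-t)" using True assms by (intro mult_strict_right_mono) auto
  also have "\<dots> \<le> (t-a)*(b-t)" using assms by (intro mult_left_mono) auto
  finally show ?thesis .
next
  case False
  then have "b' < b" using assms by auto
  have "(t-a')*(b'-t) < (t-a')*(b-t)" using \<open>b' < b\<close> assms by (intro mult_strict_left_mono) auto
  also have "\<dots> \<le> (t-a)*(b-t)" using assms by (intro mult_right_mono) auto
  finally show ?thesis .
qed

lemma cc_X:
  assumes "a < b"
  shows "fst (cc (a,b) s) = (snd (cc (a,b) s) - real a) * (real b - snd (cc (a,b) s))"
  unfolding cc_def by (simp add: power2_eq_square algebra_simps)

lemma cc_zero: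
  assumes ab: "a < b" and s: "s \<in> {0..1}" and z: "fst (cc (a,b) s) = 0"
  shows "snd (cc (a,b) s) = real a \<or> snd (cc (a,b) s) = real b"
proof -
  have "s * (1 - s) * (real b - real a)^2 = 0" using z unfolding cc_def by simp
  then have "s = 0 \<or> s = 1" using ab by auto
  then show ?thesis unfolding cc_def by auto
qed

lemma cc_pos:
  assumes ab: "a < b" and s: "s \<in> {0..1}" and z: "fst (cc (a,b) s) \<noteq> 0"
  shows "real a < snd (cc (a,b) s) \<and> snd (cc (a,b) s) < real b"
proof -
  have "s \<noteq> 0" "s \<noteq> 1" using z unfolding cc_def by auto
  then have "0 < s" "s < 1" using s by auto
  moreover have d: "0 < real b - real a" using ab by simp
  ultimately have "0 < s * (real b - real a)" "s * (real b - real a) < 1 * (real b - real a)"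
    by (auto intro: mult_pos_pos mult_strict_right_mono)
  then show ?thesis unfolding cc_def by simp
qed

lemma lam_drawing:
  assumes r: "\<forall>a b. (a,b) \<in> E \<longrightarrow> a < b \<and> b < n" and L: "lam E"
  shows "upward_layered_drawing {0..<n} E (\<lambda>_. 0) (\<lambda>v. int v) cc"
  unfolding upward_layered_drawing_def
proof (intro conjI)
  show "inj_on (\<lambda>v. (0::real, real_of_int (int v))) {0..<n}" by (auto simp: inj_on_def)
  show "\<forall>(u, v)\<in>E. continuous_on {0..1} (cc (u, v)) \<and> cc (u, v) 0 = (0, real_of_int (int u)) \<and>
      cc (u, v) 1 = (0, real_of_int (int v)) \<and> strict_mono_on {0..1} (\<lambda>t. snd (cc (u, v) t))"
  proof (intro ballI, clarify, intro conjI)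
    fix u v assume e: "(u,v) \<in> E"
    show "continuous_on {0..1} (cc (u, v))" unfolding cc_def by (intro continuous_intros)
    show "cc (u, v) 0 = (0, real_of_int (int u))" unfolding cc_def by simp
    show "cc (u, v) 1 = (0, real_of_int (int v))" unfolding cc_def by simp
    have uv: "u < v" using r e by blast
    show "strict_mono_on {0..1} (\<lambda>t. snd (cc (u, v) t))"
      unfolding monotone_on_def cc_def using uv by (auto intro!: mult_strict_right_mono)
  qed
  show "\<forall>e1\<in>E. \<forall>e2\<in>E. e1 \<noteq> e2 \<longrightarrow> cc e1 ` {0..1} \<inter> cc e2 ` {0..1} \<subseteq>
      (\<lambda>v. (0, real_of_int (int v))) ` ({fst e1, snd e1} \<inter> {fst e2, snd e2})"
  proof (intro ballI impI subsetI)
    fix e1 e2 P assume e1: "e1 \<in> E" and e2: "e2 \<in> E" and ne: "e1 \<noteq> e2"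
      and P: "P \<in> cc e1 ` {0..1} \<inter> cc e2 ` {0..1}"
    obtain a b where ab: "e1 = (a,b)" by (cases e1)
    obtain a' b' where ab': "e2 = (a',b')" by (cases e2)
    obtain s1 where s1: "s1 \<in> {0..1}" "P = cc (a,b) s1" using P ab by blast
    obtain s2 where s2: "s2 \<in> {0..1}" "P = cc (a',b') s2" using P ab' by blast
    have lt: "a < b" "a' < b'" "b < n" "b' < n" using r e1 e2 ab ab' by auto
    define t where "t = snd P"
    have X1: "fst P = (t - real a) * (real b - t)" using cc_X[OF lt(1)] s1 unfolding t_def by simp
    have X2: "fst P = (t - real a') * (real b' - t)" using cc_X[OF lt(2)] s2 unfolding t_def by simp
    show "P \<in> (\<lambda>v. (0, real_of_int (int v))) ` ({fst e1, snd e1} \<inter> {fst e2, snd e2})"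
    proof (cases "fst P = 0")
      case True
      have t1: "t = real a \<or> t = real b" using cc_zero[OF lt(1) s1(1)] True s1(2) unfolding t_def by simp
      have t2: "t = real a' \<or> t = real b'" using cc_zero[OF lt(2) s2(1)] True s2(2) unfolding t_def by simp
      obtain w where w: "w \<in> {a,b} \<inter> {a',b'}" "t = real w" using t1 t2 by auto
      have "P = (0, real_of_int (int w))" using True w(2) unfolding t_def by (cases P) auto
      then show ?thesis using w ab ab' by auto
    next
      case False
      have i1: "real a < t" "t < real b" using cc_pos[OF lt(1) s1(1)] False s1(2) unfolding t_def by auto
      have i2: "real a' < t" "t < real b'" using cc_pos[OF lt(2) s2(1)] False s2(2) unfolding t_def by auto
      have l1: "\<not> (a < a' \<and> a' < b \<and> b < b')" and l2: "\<not> (a' < a \<and> a < b' \<and> b' < b)"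
        using L e1 e2 ab ab' unfolding lam_def by blast+
      have "(t - real a') * (real b' - t) = (t - real a) * (real b - t)" using X1 X2 by simp
      moreover have "(t - real a') * (real b' - t) < (t - real a) * (real b - t) \<or>
          (t - real a) * (real b - t) < (t - real a') * (real b' - t)"
      proof (cases a a' rule: linorder_cases)
        case less
        then have "a' < b" using i1 i2 by linarith
        then have "b' \<le> b" using l1 less by auto
        then show ?thesis using nest[of a a' b' b t] less i2 by auto
      next
        case equal
        then have "b \<noteq> b'" using ne ab ab' by auto
        then show ?thesis
        proof (cases "b' < b")
          case True then show ?thesis using nest[of a a' b' b t] equal i2 by auto
        next
          case False
          then have "b < b'" using \<open>b \<noteq> b'\<close> by auto
          then show ?thesis using nest[of a' a b b' t] equal i1 by auto
        qed
      next
        case greater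
        then have "a < b'" using i1 i2 by linarith
        then have "b \<le> b'" using l2 greater by auto
        then show ?thesis using nest[of a' a b b' t] greater i1 by auto
      qed
      ultimately show ?thesis by auto
    qed
  qed
  show "\<forall>e\<in>E. \<forall>w\<in>{0..<n}. (0, real_of_int (int w)) \<in> cc e ` {0..1} \<longrightarrow> w = fst e \<or> w = snd e"
  proof (intro ballI impI)
    fix e w assume e: "e \<in> E" and w: "w \<in> {0..<n}" and P: "(0, real_of_int (int w)) \<in> cc e ` {0..1}"
    obtain a b where ab: "e = (a,b)" by (cases e)
    obtain s where s: "s \<in> {0..1}" "(0, real w) = cc (a,b) s" using P ab by auto
    have lt: "a < b" using r e ab by auto
    have "snd (cc (a,b) s) = real a \<or> snd (cc (a,b) s) = real b"
      by (rule cc_zero[OF lt s(1)]) (use s(2) in \<open>metis fst_conv\<close>)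
    then have "real w = real a \<or> real w = real b" using s(2) by (metis snd_conv)
    then show "w = fst e \<or> w = snd e" using ab by auto
  qed
qed

lemma trancl_lt:
  assumes r: "\<forall>a b. (a,b) \<in> E \<longrightarrow> a < (b::nat)" and t: "(x,y) \<in> E\<^sup>+"
  shows "x < y"
  using t
proof (induction rule: trancl_induct)
  case (base y) then show ?case using r by blast
next
  case (step y z) then show ?case using r by (meson order.strict_trans)
qed

lemma vdegree_nbrs:
  assumes r: "\<forall>a b. (a,b) \<in> E \<longrightarrow> a < (b::nat)" and f: "finite E"
  shows "vdegree E v = card (nbrs E v)"
proof -
  let ?O = "{z. (v,z) \<in> E}" and ?I = "{z. (z,v) \<in> E}"
  have fO: "finite ?O" using f by (rule finite_subset[rotated, OF finite_imageI[of E snd]]) force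
  have fI: "finite ?I" using f by (rule finite_subset[rotated, OF finite_imageI[of E fst]]) force
  have e1: "{e\<in>E. fst e = v \<or> snd e = v} = (\<lambda>z. (v,z)) ` ?O \<union> (\<lambda>z. (z,v)) ` ?I" by auto
  have d1: "(\<lambda>z. (v,z)) ` ?O \<inter> (\<lambda>z. (z,v)) ` ?I = {}" using r by auto
  have d2: "?O \<inter> ?I = {}"
  proof (rule ccontr)
    assume "?O \<inter> ?I \<noteq> {}"
    then obtain z where "(v,z) \<in> E" "(z,v) \<in> E" by blast
    then have "v < z" "z < v" using r by blast+
    then show False by simp
  qed
  have c1: "card ((\<lambda>z. (v,z)) ` ?O) = card ?O" by (rule card_image) (auto simp: inj_on_def)
  have c2: "card ((\<lambda>z. (z,v)) ` ?I) = card ?I" by (rule card_image) (auto simp: inj_on_def)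
  have "vdegree E v = card ?O + card ?I"
    unfolding vdegree_def e1 using card_Un_disjoint[OF _ _ d1] fO fI c1 c2 by simp
  moreover have "nbrs E v = ?O \<union> ?I" unfolding nbrs_def by auto
  ultimately show ?thesis using card_Un_disjoint[OF fO fI d2] by simp
qed

theorem mainTheorem5:
  fixes d :: nat
  assumes "d > 2"
  shows "\<exists>(V :: nat set) E. directed_tree V E \<and> (\<forall>v\<in>V. vdegree E v \<le> d) \<and>
           paths_at_most_one E \<and> upward_planar V E \<and> dag_span V E \<ge> d div 2 + 1"
proof -
  define k where "k = d div 2"
  define q where "q = d - 1"
  define H where "H = k + 5"
  have dq: "d = Suc q" using assms unfolding q_def by simp
  obtain n E ht where bt: "blk q True (Suc H) d = (n, E, ht)" by (cases "blk q True (Suc H) d") auto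
  have I: "Base n E" "HtI E ht" "ht 0 = Suc H" "Deg q n E ht 0 d"
    using blk_inv[OF bt] by simp_all
  have n1: "1 \<le> n" and rng: "\<forall>a b. (a,b) \<in> E \<longrightarrow> a < b \<and> b < n" and lm: "lam E"
    and P: "paths_at_most_one E" and G0: "\<forall>a. (a,0) \<notin> E" and fE: "finite E" and cE: "card E + 1 = n"
    and conn: "\<forall>v<n. \<forall>w<n. (v,w) \<in> (E \<union> E\<inverse>)\<^sup>*" and c4: "C4 E"
    using I(1) unfolding Base_def by blast+
  have lt: "\<forall>a b. (a,b) \<in> E \<longrightarrow> a < b" using rng by blast
  define V where "V = {0..<n}"
  have degv: "card (nbrs E v) = (if v = 0 then d else if ht v = 0 then 1 else d)" if "v < n" for v
    using I(4) that dq unfolding Deg_def by auto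
  have EV: "E \<subseteq> V \<times> V"
  proof
    fix e assume e: "e \<in> E"
    obtain a b where ab: "e = (a,b)" by (cases e)
    then have "a < b" "b < n" using rng e by blast+
    then show "e \<in> V \<times> V" using ab unfolding V_def by simp
  qed
  have DT: "directed_tree V E"
    unfolding directed_tree_def
  proof (intro conjI)
    show "finite V" "V \<noteq> {}" using n1 unfolding V_def by auto
    show "E \<subseteq> V \<times> V" by (rule EV)
    show "acyclic E" unfolding acyclic_def using trancl_lt[OF lt] by blast
    show "\<forall>u v. (u, v) \<in> E \<longrightarrow> (v, u) \<notin> E"
    proof (intro allI impI notI)
      fix u v assume "(u,v) \<in> E" "(v,u) \<in> E"
      then have "u < v" "v < u" using lt by blast+
      then show False by simp
    qed
    show "\<forall>u\<in>V. \<forall>v\<in>V. (u, v) \<in> (E \<union> E\<inverse>)\<^sup>*" using conn unfolding V_def by auto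
    have im: "{{u, v} | u v. (u, v) \<in> E} = (\<lambda>(u,v). {u,v}) ` E" by auto
    have inj: "inj_on (\<lambda>(u,v). {u,v}) E"
    proof (rule inj_onI, clarify)
      fix a b a' b' assume e: "(a,b) \<in> E" "(a',b') \<in> E" and eq: "{a,b} = {a',b'}"
      have "a < b" "a' < b'" using lt e by auto
      then show "a = a' \<and> b = b'" using eq by (auto simp: doubleton_eq_iff)
    qed
    show "card V = card {{u, v} |u v. (u, v) \<in> E} + 1"
      unfolding im card_image[OF inj] using cE unfolding V_def by simp
  qed
  have DG: "\<forall>v\<in>V. vdegree E v \<le> d"
  proof
    fix v assume "v \<in> V"
    then have "v < n" unfolding V_def by simp
    then show "vdegree E v \<le> d" using degv vdegree_nbrs[OF lt fE] dq by auto
  qed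
  have DR: "upward_layered_drawing V E (\<lambda>_. 0) (\<lambda>v. int v) cc"
    unfolding V_def by (rule lam_drawing[OF rng lm])
  have UP: "upward_planar V E" unfolding upward_planar_def using DR by blast
  define Pp where "Pp s = (\<exists>x y c. upward_layered_drawing V E x y c \<and> (\<forall>(u, v) \<in> E. y v - y u \<le> int s))" for s
  have Pn: "Pp n" unfolding Pp_def
  proof (intro exI conjI)
    show "upward_layered_drawing V E (\<lambda>_. 0) (\<lambda>v. int v) cc" by (rule DR)
    show "\<forall>(u, v)\<in>E. int v - int u \<le> int n"
    proof (intro ballI, clarify)
      fix a b assume "(a,b) \<in> E"
      then have "b < n" using rng by blast
      then show "int b - int a \<le> int n" by simp
    qed
  qed
  have SP: "dag_span V E \<ge> k + 1"
  proof (rule ccontr)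
    assume "\<not> dag_span V E \<ge> k + 1"
    then have lek: "(LEAST s. Pp s) \<le> k" unfolding dag_span_def Pp_def by simp
    have "Pp (LEAST s. Pp s)" using Pn by (rule LeastI)
    then obtain x y c where D: "upward_layered_drawing V E x y c"
      and sp: "\<forall>(u, v) \<in> E. y v - y u \<le> int (LEAST s. Pp s)" unfolding Pp_def by blast
    have span: "\<forall>p q. (p,q) \<in> E \<longrightarrow> y q - y p \<le> int k"
    proof (intro allI impI)
      fix p q assume "(p,q) \<in> E"
      then have "y q - y p \<le> int (LEAST s. Pp s)" using sp by blast
      then show "y q - y p \<le> int k" using lek by linarith
    qed
    obtain X where G: "good V E x y X" using drawing_good[OF D] by blast
    have S: "strct V E ht d"
      unfolding strct_def
    proof (intro conjI)
      show "finite V" unfolding V_def by simp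
      show "E \<subseteq> V \<times> V" by (rule EV)
      show "paths_at_most_one E" by (rule P)
      show "1 \<le> d" using assms by simp
      show "\<forall>v\<in>V. 1 \<le> ht v \<longrightarrow> d \<le> card (nbrs E v)" using degv unfolding V_def by auto
      show "\<forall>v z. (v, z) \<in> E \<or> (z, v) \<in> E \<longrightarrow> ht v \<le> ht z + 1"
      proof (intro allI impI)
        fix v z assume "(v, z) \<in> E \<or> (z, v) \<in> E"
        then have "ht v = ht z + 1 \<or> ht z = ht v + 1" using I(2) unfolding HtI_def by blast
        then show "ht v \<le> ht z + 1" by linarith
      qed
    qed
    have "nbrs E 0 \<noteq> {}" using degv[of 0] n1 assms by auto
    then obtain q0 where r: "(0, q0) \<in> E" using G0 unfolding nbrs_def by auto
    show False
    proof (rule lower_bound[OF G S _ r])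
      show "\<forall>u a b g. ((u,a)\<in>E \<or> (a,u)\<in>E) \<longrightarrow> ((a,b)\<in>E \<or> (b,a)\<in>E) \<longrightarrow> ((b,g)\<in>E \<or> (g,b)\<in>E)
              \<longrightarrow> ((g,u)\<in>E \<or> (u,g)\<in>E) \<longrightarrow> u \<noteq> b \<longrightarrow> a \<noteq> g \<longrightarrow> False"
        using c4 unfolding C4_def by blast
      show "1 \<le> k" using assms unfolding k_def by simp
      show "d = 2*k \<or> d = 2*k+1" unfolding k_def by auto
      show "d = 2*k \<Longrightarrow> 2 \<le> k" using assms unfolding k_def by simp
      show "k + 5 \<le> ht 0" using I(3) unfolding H_def by simp
      show "\<forall>p q. (p,q) \<in> E \<longrightarrow> y q - y p \<le> int k" by (rule span)
    qed
  qed
  show ?thesis using DT DG P UP SP unfolding k_def by blast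
qed

end
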